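(* Let $\Lambda$ be the flat torus of side length $L$, let $R_0>0$ and $R>0$ with $R_0<R/10$ (and $R/10<L/2$), and let $y_1,\dots,y_n\in\Lambda$ satisfy $d(y_i,y_j)\ge R/5$ for $i\ne j$. Let $0\le\lambda<\pi/2$. Then, as operators on $L^2(\Lambda)$, $$-\Delta-\frac{\lambda^2}{R_0^2}\sum_{i=1}^n\theta(R_0-d(x,y_i))\ \ge\ -\frac{3R_0}{(R/10)^3-R_0^3}\left(\frac{\tan\lambda}{\lambda}-1\right)\sum_{i=1}^n\theta(R/10-d(x,y_i)).$$
   Context: $\Delta$ is the Laplacian on $\Lambda$ (periodic boundary conditions), $d$ the torus distance $d(x,y)=\min_{k\in\mathbb{Z}^3}|x-y-kL|$, and $\theta$ the Heaviside function with $\theta(t)=0$ for $t<0$ and $\theta(t)=1$ for $t\ge0$; the potential terms act as multiplication operators. For $\lambda=0$ the expression $\frac{\tan\lambda}{\lambda}-1$ is understood as its limit $0$. *)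

theory Defs
  imports "HOL-Analysis.Analysis"
begin

text \<open>Flat torus of side length L, realised as L-periodic functions on R^3;
  the fundamental domain is the cube [0,L]^3.\<close>

definition fund_cube :: "real \<Rightarrow> (real^3) set" where
  "fund_cube L = cbox 0 (\<chi> i. L)"

definition torus_dist :: "real \<Rightarrow> real^3 \<Rightarrow> real^3 \<Rightarrow> real" where
  "torus_dist L x y = Inf {norm (x - y - L *\<^sub>R k) | k :: real^3. \<forall>i. k $ i \<in> \<int>}"

definition heaviside :: "real \<Rightarrow> real" where
  "heaviside t = (if t \<ge> 0 then 1 else 0)"

definition tan_factor :: "real \<Rightarrow> real" where
  "tan_factor a = (if a = 0 then 0 else tan a / a - 1)"

definition periodic3 :: "real \<Rightarrow> (real^3 \<Rightarrow> 'a) \<Rightarrow> bool" where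
  "periodic3 L f \<longleftrightarrow> (\<forall>x k. f (x + L *\<^sub>R axis k 1) = f x)"

definition C1_fun :: "(real^3 \<Rightarrow> complex) \<Rightarrow> bool" where
  "C1_fun f \<longleftrightarrow> (\<exists>D. (\<forall>x. (f has_derivative D x) (at x)) \<and>
      (\<forall>k. continuous_on UNIV (\<lambda>x. D x (axis k 1))))"

definition grad_sq :: "(real^3 \<Rightarrow> complex) \<Rightarrow> real^3 \<Rightarrow> real" where
  "grad_sq f x = (\<Sum>k\<in>UNIV. (cmod (frechet_derivative f (at x) (axis k 1)))\<^sup>2)"

end

theory Submission
  imports Defs
begin

definition sbox :: "real \<Rightarrow> 3 \<Rightarrow> real \<Rightarrow> real \<Rightarrow> (real^3) set" where
  "sbox L k a b = cbox (\<chi> i. if i = k then a else 0) (\<chi> i. if i = k then b else L)"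

lemma sbox_shift:
  fixes H :: "real^3 \<Rightarrow> real"
  assumes "continuous_on UNIV H"
  shows "integral (sbox L k a b) (\<lambda>x. H (x + c *\<^sub>R axis k 1)) = integral (sbox L k (a + c) (b + c)) H"
proof -
  have "(H has_integral integral (sbox L k (a + c) (b + c)) H) (sbox L k (a + c) (b + c))"
    unfolding sbox_def by (intro integrable_integral integrable_continuous continuous_on_subset[OF assms]) auto
  from has_integral_affinity[OF this[unfolded sbox_def], of 1 "c *\<^sub>R axis k 1"]
  have "((\<lambda>x. H (x + c *\<^sub>R axis k 1)) has_integral integral (sbox L k (a + c) (b + c)) H)
     ((\<lambda>x. x - c *\<^sub>R axis k 1) ` cbox (\<chi> i. if i = k then a + c else 0) (\<chi> i. if i = k then b + c else L))"
    by (simp add: sbox_def)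
  moreover have "((\<lambda>x. x - c *\<^sub>R axis k 1) ` cbox (\<chi> i. if i = k then a + c else 0) (\<chi> i. if i = k then b + c else L))
      = sbox L k a b"
  proof (rule set_eqI, rule iffI)
    fix x assume "x \<in> (\<lambda>x. x - c *\<^sub>R axis k 1) ` cbox (\<chi> i. if i = k then a + c else 0) (\<chi> i. if i = k then b + c else L)"
    then show "x \<in> sbox L k a b" by (clarsimp simp: sbox_def mem_box_cart axis_def) (smt (verit))
  next
    fix x assume "x \<in> sbox L k a b"
    then have "x + c *\<^sub>R axis k 1 \<in> cbox (\<chi> i. if i = k then a + c else 0) (\<chi> i. if i = k then b + c else L)"
      by (auto simp: sbox_def mem_box_cart axis_def split: if_splits)
    then show "x \<in> (\<lambda>x. x - c *\<^sub>R axis k 1) ` cbox (\<chi> i. if i = k then a + c else 0) (\<chi> i. if i = k then b + c else L)"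
      by (rule rev_image_eqI) simp
  qed
  ultimately show ?thesis by (simp add: integral_unique)
qed

lemma sbox_split:
  fixes H :: "real^3 \<Rightarrow> real"
  assumes "continuous_on UNIV H" "a \<le> c" "c \<le> b"
  shows "integral (sbox L k a b) H = integral (sbox L k a c) H + integral (sbox L k c b) H"
proof -
  have ab: "axis k (1::real) \<in> Basis" by simp
  have "H integrable_on sbox L k a b" unfolding sbox_def
    by (intro integrable_continuous continuous_on_subset[OF assms(1)]) auto
  from integral_split[OF this[unfolded sbox_def] ab, of c]
  have e: "integral (sbox L k a b) H = integral (sbox L k a b \<inter> {x. x \<bullet> axis k 1 \<le> c}) H +
      integral (sbox L k a b \<inter> {x. x \<bullet> axis k 1 \<ge> c}) H" by (simp add: sbox_def)
  have 1: "sbox L k a b \<inter> {x. x \<bullet> axis k 1 \<le> c} = sbox L k a c"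
    using assms by (auto simp: sbox_def mem_box_cart inner_axis split: if_splits) (smt (verit))+
  have 2: "sbox L k a b \<inter> {x. x \<bullet> axis k 1 \<ge> c} = sbox L k c b"
    using assms by (auto simp: sbox_def mem_box_cart inner_axis split: if_splits) (smt (verit))+
  show ?thesis using e 1 2 by simp
qed

lemma fund_cube_sbox: "fund_cube L = sbox L k 0 L"
  by (auto simp: fund_cube_def sbox_def mem_box_cart)

lemma periodic_shift_integral:
  fixes H :: "real^3 \<Rightarrow> real"
  assumes cont: "continuous_on UNIV H" and per: "\<And>x. H (x + L *\<^sub>R axis k 1) = H x"
    and t: "0 \<le> t" "t \<le> L"
  shows "integral (fund_cube L) (\<lambda>x. H (x + t *\<^sub>R axis k 1)) = integral (fund_cube L) H"
proof -
  let ?e = "axis k 1 :: real^3"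
  have c2: "continuous_on UNIV (\<lambda>x. H (x + t *\<^sub>R ?e))"
    by (intro continuous_on_compose2[OF cont] continuous_intros) auto
  have per2: "H (x + t *\<^sub>R ?e) = H (x + (t - L) *\<^sub>R ?e)" for x
    using per[of "x + (t - L) *\<^sub>R ?e"] by (simp add: algebra_simps)
  have "integral (fund_cube L) (\<lambda>x. H (x + t *\<^sub>R ?e)) =
     integral (sbox L k 0 (L - t)) (\<lambda>x. H (x + t *\<^sub>R ?e)) + integral (sbox L k (L - t) L) (\<lambda>x. H (x + t *\<^sub>R ?e))"
    unfolding fund_cube_sbox[of L k] using t by (intro sbox_split c2) auto
  also have "integral (sbox L k (L - t) L) (\<lambda>x. H (x + t *\<^sub>R ?e)) = integral (sbox L k (L - t) L) (\<lambda>x. H (x + (t - L) *\<^sub>R ?e))"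
    using per2 by simp
  also have "\<dots> = integral (sbox L k 0 t) H" using sbox_shift[OF cont, of L k "L - t" L "t - L"] by simp
  also have "integral (sbox L k 0 (L - t)) (\<lambda>x. H (x + t *\<^sub>R ?e)) = integral (sbox L k t L) H"
    using sbox_shift[OF cont, of L k 0 "L - t" t] by simp
  also have "integral (sbox L k t L) H + integral (sbox L k 0 t) H = integral (fund_cube L) H"
    unfolding fund_cube_sbox[of L k] using t sbox_split[OF cont, of 0 t L L k] by simp
  finally show ?thesis .
qed

definition rnd :: "real \<Rightarrow> real^3 \<Rightarrow> real^3" where
  "rnd L z = (\<chi> j. of_int (round (z $ j / L)))"

definition wrap :: "real \<Rightarrow> real^3 \<Rightarrow> real^3" where
  "wrap L z = z - L *\<^sub>R rnd L z"

lemma rnd_int: "\<forall>i. rnd L z $ i \<in> \<int>"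
  by (simp add: rnd_def)

lemma wrap_le:
  assumes L: "L > 0" and k: "\<forall>i. k $ i \<in> \<int>"
  shows "norm (wrap L z) \<le> norm (z - L *\<^sub>R k)"
proof (rule norm_le_componentwise_cart)
  fix i
  obtain m where m: "k $ i = of_int m" using k by (meson Ints_cases)
  have "\<bar>z $ i / L - of_int (round (z $ i / L))\<bar> \<le> \<bar>z $ i / L - of_int m\<bar>"
    by (rule round_diff_minimal)
  then have "L * \<bar>z $ i / L - of_int (round (z $ i / L))\<bar> \<le> L * \<bar>z $ i / L - of_int m\<bar>"
    using L by simp
  then have "\<bar>L * (z $ i / L - of_int (round (z $ i / L)))\<bar> \<le> \<bar>L * (z $ i / L - of_int m)\<bar>"
    using L by (simp add: abs_mult)
  then show "norm (wrap L z $ i) \<le> norm ((z - L *\<^sub>R k) $ i)"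
    using L by (simp add: wrap_def rnd_def m right_diff_distrib)
qed

lemma torus_dist_wrap:
  assumes L: "L > 0"
  shows "torus_dist L x y = norm (wrap L (x - y))"
  unfolding torus_dist_def
proof (rule cInf_eq_minimum)
  show "norm (wrap L (x - y)) \<in> {norm (x - y - L *\<^sub>R k) |k. \<forall>i. k $ i \<in> \<int>}"
    using rnd_int[of L "x - y"] by (auto simp: wrap_def)
  fix d assume "d \<in> {norm (x - y - L *\<^sub>R k) |k. \<forall>i. k $ i \<in> \<int>}"
  then show "norm (wrap L (x - y)) \<le> d" using wrap_le[OF L] by auto
qed

lemma torus_dist_le:
  assumes L: "L > 0" and k: "\<forall>i. k $ i \<in> \<int>"
  shows "torus_dist L x y \<le> norm (x - y - L *\<^sub>R k)"
  using wrap_le[OF L k, of "x - y"] torus_dist_wrap[OF L] by simp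

lemma torus_dist_lip:
  assumes L: "L > 0"
  shows "torus_dist L x y \<le> torus_dist L x' y + dist x x'"
proof -
  have "torus_dist L x y \<le> norm (x - y - L *\<^sub>R rnd L (x' - y))"
    by (rule torus_dist_le[OF L rnd_int])
  also have "\<dots> \<le> norm (x' - y - L *\<^sub>R rnd L (x' - y)) + dist x x'"
    using norm_triangle_ineq[of "x' - y - L *\<^sub>R rnd L (x' - y)" "x - x'"]
    by (simp add: dist_norm algebra_simps)
  also have "norm (x' - y - L *\<^sub>R rnd L (x' - y)) = torus_dist L x' y"
    using torus_dist_wrap[OF L] by (simp add: wrap_def)
  finally show ?thesis .
qed

lemma continuous_torus_dist:
  assumes L: "L > 0"
  shows "continuous_on UNIV (\<lambda>x. torus_dist L x y)"
proof (rule continuous_onI)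
  fix x and e :: real assume "e > 0"
  show "\<exists>d>0. \<forall>x'\<in>UNIV. dist x' x < d \<longrightarrow> dist (torus_dist L x' y) (torus_dist L x y) \<le> e"
  proof (intro exI[of _ e] conjI ballI impI)
    fix x' assume "dist x' x < e"
    then show "dist (torus_dist L x' y) (torus_dist L x y) \<le> e"
      using torus_dist_lip[OF L, of x' y x] torus_dist_lip[OF L, of x y x'] by (simp add: dist_real_def dist_commute)
  qed (use \<open>e > 0\<close> in auto)
qed

lemma torus_dist_nonneg: "L > 0 \<Longrightarrow> torus_dist L x y \<ge> 0"
  by (simp add: torus_dist_wrap)

lemma round_shift1: "round (1 + a) = round (a::real) + 1"
proof -
  have "1 + a + 1/2 = (a + 1/2) + 1" by simp
  then show ?thesis unfolding round_def using floor_add2[of 1 "a + 1/2"] by (simp add: add.commute)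
qed

lemma wrap_periodic:
  assumes L: "L > 0"
  shows "wrap L (z + L *\<^sub>R axis k 1) = wrap L z"
proof -
  have "(z + L *\<^sub>R axis k 1) $ j / L = z $ j / L + (if j = k then 1 else 0)" for j
    using L by (simp add: axis_def add_divide_distrib)
  then show ?thesis using L
    by (auto simp: wrap_def rnd_def vec_eq_iff axis_def round_shift1 algebra_simps)
qed

lemma torus_dist_periodic:
  assumes L: "L > 0"
  shows "torus_dist L (x + L *\<^sub>R axis k 1) y = torus_dist L x y"
proof -
  have "x + L *\<^sub>R axis k 1 - y = (x - y) + L *\<^sub>R axis k 1" by simp
  then show ?thesis using torus_dist_wrap[OF L] wrap_periodic[OF L] by metis
qed

lemma wrap_comp_le: "L > 0 \<Longrightarrow> \<bar>wrap L z $ j\<bar> \<le> L / 2"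
proof -
  assume L: "L > 0"
  have "\<bar>of_int (round (z $ j / L)) - z $ j / L\<bar> \<le> 1/2" by (rule of_int_round_abs_le)
  then have "L * \<bar>of_int (round (z $ j / L)) - z $ j / L\<bar> \<le> L * (1/2)" using L by simp
  then have "\<bar>L * (of_int (round (z $ j / L)) - z $ j / L)\<bar> \<le> L / 2" using L by (simp add: abs_mult)
  then show ?thesis using L by (simp add: wrap_def rnd_def right_diff_distrib abs_minus_commute)
qed

lemma local_rep:
  fixes \<Phi> :: "real^3 \<Rightarrow> 'a::zero"
  assumes L: "L > 0" and R1: "R1 < L / 2" and van: "\<And>z. norm z \<ge> R1 \<Longrightarrow> \<Phi> z = 0"
    and near: "norm (z - z0) < L / 2 - R1"
  shows "\<Phi> (wrap L z) = \<Phi> (z - L *\<^sub>R rnd L z0)"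
proof (cases "norm (z - L *\<^sub>R rnd L z0) < R1")
  case True
  have "rnd L z = rnd L z0"
  proof -
    have "round (z $ j / L) = round (z0 $ j / L)" for j
    proof (rule round_unique')
      have "\<bar>(z - L *\<^sub>R rnd L z0) $ j\<bar> < R1" using True component_le_norm_cart le_less_trans by blast
      then have "\<bar>z $ j - L * of_int (round (z0 $ j / L))\<bar> < L / 2" using R1 by (simp add: rnd_def)
      then have "\<bar>L * (z $ j / L - of_int (round (z0 $ j / L)))\<bar> < L / 2" using L by (simp add: right_diff_distrib)
      then have "L * \<bar>z $ j / L - of_int (round (z0 $ j / L))\<bar> < L * (1/2)" using L by (simp add: abs_mult)
      then show "\<bar>z $ j / L - of_int (round (z0 $ j / L))\<bar> < 1/2" using L mult_less_cancel_left_pos by blast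
    qed
    then show ?thesis by (simp add: rnd_def)
  qed
  then show ?thesis by (simp add: wrap_def)
next
  case False
  have "norm (wrap L z) \<ge> R1"
  proof (rule ccontr)
    assume a: "\<not> R1 \<le> norm (wrap L z)"
    show False
    proof (cases "rnd L z = rnd L z0")
      case True then show False using a False by (simp add: wrap_def)
    next
      case False
      then obtain j where j: "round (z $ j / L) \<noteq> round (z0 $ j / L)" by (auto simp: rnd_def vec_eq_iff)
      then have d1: "\<bar>of_int (round (z $ j / L)) - of_int (round (z0 $ j / L))\<bar> \<ge> (1::real)"
        by (metis of_int_diff of_int_1_le_iff of_int_abs right_minus_eq zero_less_abs_iff int_one_le_iff_zero_less)
      have e1: "\<bar>wrap L z $ j\<bar> < R1" using a component_le_norm_cart[of "wrap L z" j] by linarith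
      have e2: "\<bar>wrap L z0 $ j\<bar> \<le> L / 2" by (rule wrap_comp_le[OF L])
      have e3: "\<bar>z $ j - z0 $ j\<bar> < L / 2 - R1" using near component_le_norm_cart[of "z - z0" j] by simp
      have "\<bar>L * (of_int (round (z $ j / L)) - of_int (round (z0 $ j / L)))\<bar> < L"
      proof -
        have aux: "\<bar>a\<bar> < R1 \<Longrightarrow> \<bar>b\<bar> * 2 \<le> L \<Longrightarrow> \<bar>c - d\<bar> < L/2 - R1 \<Longrightarrow> \<bar>(c - a) - (d - b)\<bar> < L" for a b c d :: real
          by (auto simp: abs_less_iff abs_le_iff)
        show ?thesis using e1 e2 e3 aux[of "z $ j - L * of_int (round (z $ j / L))" "z0 $ j - L * of_int (round (z0 $ j / L))" "z $ j" "z0 $ j"]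
          by (simp add: wrap_def rnd_def right_diff_distrib)
      qed
      then have "L * \<bar>of_int (round (z $ j / L)) - of_int (round (z0 $ j / L))\<bar> < L * 1" using L by (simp add: abs_mult)
      then show False using d1 L by (simp add: mult_less_cancel_left_pos)
    qed
  qed
  then show ?thesis using van False by simp
qed

lemma sin_minus_xcos_nonneg:
  fixes x :: real assumes "0 \<le> x" "x \<le> pi"
  shows "0 \<le> sin x - x * cos x"
proof -
  have "(\<lambda>x. sin x - x * cos x) 0 \<le> (\<lambda>x. sin x - x * cos x) x"
  proof (rule DERIV_nonneg_imp_nondecreasing[OF assms(1)])
    fix t assume t: "0 \<le> t" "t \<le> x"
    show "\<exists>y. ((\<lambda>x. sin x - x * cos x) has_real_derivative y) (at t) \<and> 0 \<le> y"
      by (intro exI[of _ "t * sin t"] conjI)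
         (auto intro!: derivative_eq_intros mult_nonneg_nonneg sin_ge_zero simp: t algebra_simps
           intro: order_trans[OF t(2) assms(2)])
  qed
  then show ?thesis by simp
qed

lemma sin_minus_xcos_le:
  fixes x :: real assumes "0 \<le> x"
  shows "sin x - x * cos x \<le> x ^ 3 / 3"
proof -
  have "(\<lambda>x. x ^ 3 / 3 - (sin x - x * cos x)) 0 \<le> (\<lambda>x. x ^ 3 / 3 - (sin x - x * cos x)) x"
  proof (rule DERIV_nonneg_imp_nondecreasing[OF assms(1)])
    fix t assume t: "0 \<le> t" "t \<le> x"
    have "t * sin t \<le> t * t" using sin_x_le_x[of t] t by (simp add: mult_left_mono)
    then show "\<exists>y. ((\<lambda>x. x ^ 3 / 3 - (sin x - x * cos x)) has_real_derivative y) (at t) \<and> 0 \<le> y"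
      by (intro exI[of _ "t^2 - t * sin t"] conjI)
         (auto intro!: derivative_eq_intros simp: algebra_simps power2_eq_square)
  qed
  then show ?thesis by simp
qed

definition qd_of :: "(real \<Rightarrow> real) \<Rightarrow> (real \<Rightarrow> real) \<Rightarrow> (real \<Rightarrow> real) \<Rightarrow> real \<Rightarrow> real" where
  "qd_of u du ddu r = - ddu r / (r * u r) + du r * (u r + r * du r) / (r^2 * (u r)^2)"

lemma q_deriv:
  assumes "(u has_real_derivative du r) (at r)" "(du has_real_derivative ddu r) (at r)"
    and "u r \<noteq> 0" "r \<noteq> 0"
  shows "((\<lambda>r. - du r / (r * u r)) has_real_derivative qd_of u du ddu r) (at r)"
  using assms
  apply -
  apply (rule derivative_eq_intros refl | assumption)+
  apply (auto simp: qd_of_def field_simps power2_eq_square)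
  done

lemma q_riccati:
  assumes "u r \<noteq> 0" "r \<noteq> 0"
  shows "3 * (- du r / (r * u r)) + qd_of u du ddu r * r - (- du r / (r * u r))^2 * r^2
     = - (ddu r + 2 * du r / r) / u r"
  using assms by (simp add: qd_of_def field_simps power2_eq_square)

locale prof =
  fixes R0 R1 lam :: real
  assumes R0: "0 < R0" and R01: "R0 < R1" and lam0: "0 < lam" and lam1: "lam < pi / 2"
begin

definition "kk = lam / R0"
definition "uin r = sin (kk * r) / r"
definition "duin r = (kk * r * cos (kk * r) - sin (kk * r)) / r^2"
definition "dduin r = (- (kk^2)) * sin (kk * r) / r - 2 * (kk * r * cos (kk * r) - sin (kk * r)) / r^3"
definition "Dd = R1^3 - R0^3"
definition "Cc = (sin lam - lam * cos lam) / (2 * Dd)"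
definition "Bc = 2 * Cc * R1^3"
definition "Ac = sin lam / R0 - Bc / R0 - Cc * R0^2"
definition "uout r = Ac + Bc / r + Cc * r^2"
definition "duout r = - Bc / r^2 + 2 * Cc * r"
definition "dduout r = 2 * Bc / r^3 + 2 * Cc"
definition "cc = 3 * R0 * (tan lam / lam - 1) / Dd"
definition "qin r = - duin r / (r * uin r)"
definition "qout r = - duout r / (r * uout r)"
definition "qf r = (if r \<le> R0 then qin r else if r \<le> R1 then qout r else 0)"
definition "qdf r = (if r < R0 then qd_of uin duin dduin r else if r < R1 then qd_of uout duout dduout r else 0)"

lemma Dd_pos: "Dd > 0"
  using R0 R01 by (simp add: Dd_def power_strict_mono)

lemma uin_deriv: "r \<noteq> 0 \<Longrightarrow> (uin has_real_derivative duin r) (at r)"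
  unfolding uin_def[abs_def] duin_def
  apply (rule derivative_eq_intros refl | assumption)+
  apply (auto simp: field_simps power2_eq_square)
  done

lemma duin_deriv: "r \<noteq> 0 \<Longrightarrow> (duin has_real_derivative dduin r) (at r)"
  unfolding duin_def[abs_def] dduin_def
  apply (rule derivative_eq_intros refl | assumption)+
  apply (auto simp: field_simps power2_eq_square power3_eq_cube)
  done

lemma uout_deriv: "r \<noteq> 0 \<Longrightarrow> (uout has_real_derivative duout r) (at r)"
  unfolding uout_def[abs_def] duout_def
  apply (rule derivative_eq_intros refl | assumption)+
  apply (auto simp: field_simps power2_eq_square)
  done

lemma duout_deriv: "r \<noteq> 0 \<Longrightarrow> (duout has_real_derivative dduout r) (at r)"
  unfolding duout_def[abs_def] dduout_def
  by (auto intro!: derivative_eq_intros simp: field_simps power2_eq_square power3_eq_cube)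

lemma lapl_in: "r \<noteq> 0 \<Longrightarrow> dduin r + 2 * duin r / r = (- (kk^2)) * uin r"
  by (simp add: dduin_def duin_def uin_def field_simps power2_eq_square power3_eq_cube)

lemma lapl_out: "r \<noteq> 0 \<Longrightarrow> dduout r + 2 * duout r / r = 6 * Cc"
  by (simp add: dduout_def duout_def field_simps power2_eq_square power3_eq_cube)


lemma sin_pos: "sin lam > 0" using lam0 lam1 by (intro sin_gt_zero) auto
lemma cos_pos: "cos lam > 0" using lam0 lam1 by (intro cos_gt_zero_pi) auto

lemma dpos: "sin lam - lam * cos lam > 0"
proof -
  have der: "\<exists>y. ((\<lambda>x. sin x - x * cos x) has_real_derivative y) (at t) \<and> 0 < y"
    if t: "lam / 2 \<le> t" "t \<le> lam" for t
  proof -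
    have "0 < t" "t < pi" using t lam0 lam1 by auto
    then have "0 < t * sin t" by (simp add: sin_gt_zero)
    then show ?thesis
      by (intro exI[of _ "t * sin t"] conjI) (auto intro!: derivative_eq_intros simp: algebra_simps)
  qed
  have "(\<lambda>x. sin x - x * cos x) (lam/2) < (\<lambda>x. sin x - x * cos x) lam"
    using DERIV_pos_imp_increasing[of "lam/2" lam "\<lambda>x. sin x - x * cos x"] der lam0 by simp
  moreover have "0 \<le> sin (lam/2) - lam/2 * cos (lam/2)"
    using lam0 lam1 by (intro sin_minus_xcos_nonneg) auto
  ultimately show ?thesis by simp
qed

lemma Cc_pos: "Cc > 0"
  using dpos Dd_pos by (simp add: Cc_def)

lemma tan_eq: "tan lam / lam - 1 = (sin lam - lam * cos lam) / (lam * cos lam)"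
  using lam0 cos_pos by (simp add: tan_def field_simps)

lemma cc_pos: "cc > 0"
  using tan_eq dpos lam0 cos_pos Dd_pos R0 by (simp add: cc_def)

lemma R0uout_R1: "R0 * uout R1 = sin lam - (sin lam - lam * cos lam) * ((2*R1^3 - 3*R0*R1^2 + R0^3) / (2 * Dd))"
  using R0 R01 Dd_pos by (simp add: uout_def Ac_def Bc_def Cc_def field_simps power2_eq_square power3_eq_cube)

lemma X_le1: "(2*R1^3 - 3*R0*R1^2 + R0^3) / (2 * Dd) \<le> 1"
proof -
  have "R0^2 \<le> R1^2" using R0 R01 by (simp add: power_mono)
  then have "R0 * R0^2 \<le> R0 * R1^2" using R0 by (simp add: mult_left_mono)
  then have "2*R1^3 - 3*R0*R1^2 + R0^3 \<le> 2 * Dd"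
    by (simp add: Dd_def power2_eq_square power3_eq_cube algebra_simps)
  then show ?thesis using Dd_pos by simp
qed

lemma R0uout_ge: "lam * cos lam \<le> R0 * uout R1"
proof -
  have "(sin lam - lam * cos lam) * ((2*R1^3 - 3*R0*R1^2 + R0^3) / (2 * Dd)) \<le> (sin lam - lam * cos lam) * 1"
    using X_le1 dpos by (intro mult_left_mono) auto
  then show ?thesis using R0uout_R1 by simp
qed

lemma uout_R1_pos: "uout R1 > 0"
proof -
  have "0 < lam * cos lam" using lam0 cos_pos by simp
  then have "0 < R0 * uout R1" using R0uout_ge by linarith
  then show ?thesis using R0 by (simp add: zero_less_mult_iff)
qed

lemma key: "6 * Cc \<le> cc * uout R1"
proof -
  let ?d = "sin lam - lam * cos lam"
  have "6 * Cc = 3 * ?d / Dd" using Dd_pos by (simp add: Cc_def field_simps)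
  also have "\<dots> = 3 * ?d / (lam * cos lam * Dd) * (lam * cos lam)" using lam0 cos_pos by simp
  also have "\<dots> \<le> 3 * ?d / (lam * cos lam * Dd) * (R0 * uout R1)"
    using R0uout_ge dpos lam0 cos_pos Dd_pos by (intro mult_left_mono) auto
  also have "\<dots> = cc * uout R1" by (simp add: cc_def tan_eq)
  finally show ?thesis .
qed

lemma uout_mono: assumes "R0 \<le> r" "r \<le> R1" shows "uout R1 \<le> uout r"
proof -
  have r: "r > 0" using assms R0 by simp
  have "uout r - uout R1 = Cc * (R1 - r) * (2 * R1^2 / r - R1 - r)"
    using r R01 R0 by (simp add: uout_def Bc_def field_simps power2_eq_square power3_eq_cube)
  moreover have "2 * R1^2 / r - R1 - r \<ge> 0"
  proof -
    have "(R1 + r) * r \<le> (2 * R1) * R1" using assms R0 by (intro mult_mono) auto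
    then have "2 * R1^2 \<ge> (R1 + r) * r" by (simp add: power2_eq_square)
    then show ?thesis using r by (simp add: field_simps)
  qed
  moreover have "Cc * (R1 - r) \<ge> 0" using Cc_pos assms by simp
  ultimately have "uout r - uout R1 \<ge> 0" by (metis mult_nonneg_nonneg)
  then show ?thesis by simp
qed

lemma uout_pos: "R0 \<le> r \<Longrightarrow> r \<le> R1 \<Longrightarrow> uout r > 0"
  using uout_mono uout_R1_pos by (meson less_le_trans)

lemma out_ineq: assumes "R0 \<le> r" "r \<le> R1" shows "- cc \<le> - 6 * Cc / uout r"
proof -
  have "6 * Cc \<le> cc * uout r"
    using key uout_mono[OF assms] cc_pos by (meson mult_left_mono less_imp_le order_trans)
  then have "6 * Cc / uout r \<le> cc" using uout_pos[OF assms] by (simp add: divide_le_eq)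
  then show ?thesis by simp
qed

lemma uin_pos: assumes "0 < r" "r \<le> R0" shows "uin r > 0"
proof -
  have "lam * r \<le> lam * R0" using assms lam0 by (simp add: mult_left_mono)
  then have "kk * r \<le> lam" using assms R0 by (simp add: kk_def field_simps)
  moreover have "0 < kk * r" using assms R0 lam0 by (simp add: kk_def)
  ultimately have "sin (kk * r) > 0" using lam1 by (intro sin_gt_zero) auto
  then show ?thesis using assms by (simp add: uin_def)
qed

lemma match_u1: "uout R0 = uin R0"
  using R0 R01 by (simp add: uout_def uin_def Ac_def kk_def)

lemma match_u2: "duout R0 = duin R0"
proof -
  have "duout R0 = - 2 * Cc * Dd / R0^2"
    using R0 by (simp add: duout_def Bc_def Dd_def field_simps power2_eq_square power3_eq_cube)
  also have "\<dots> = - (sin lam - lam * cos lam) / R0^2" using Dd_pos R0 by (simp add: Cc_def field_simps)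
  also have "\<dots> = duin R0" using R0 by (simp add: duin_def kk_def field_simps)
  finally show ?thesis .
qed

lemmas match_u = match_u1 match_u2

lemma match_q: "qout R0 = qin R0"
  by (simp add: qout_def qin_def match_u)

lemma qout_R1: "qout R1 = 0"
  using R0 R01 by (simp add: qout_def duout_def Bc_def power2_eq_square power3_eq_cube)

lemma uin_ne: "0 < r \<Longrightarrow> r \<le> R0 \<Longrightarrow> uin r \<noteq> 0" using uin_pos by force
lemma uout_ne: "R0 \<le> r \<Longrightarrow> r \<le> R1 \<Longrightarrow> uout r \<noteq> 0" using uout_pos by force

lemma qf_deriv:
  assumes r: "0 < r" "r \<noteq> R0" "r \<noteq> R1"
  shows "(qf has_real_derivative qdf r) (at r)"
proof -
  consider "r < R0" | "R0 < r" "r < R1" | "R1 < r" using r by linarith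
  then show ?thesis
  proof cases
    case 1
    have "(qin has_real_derivative qd_of uin duin dduin r) (at r)"
      unfolding qin_def[abs_def] using r 1 by (intro q_deriv uin_deriv duin_deriv uin_ne) auto
    then have "(qf has_real_derivative qd_of uin duin dduin r) (at r)"
      by (rule has_field_derivative_transform_within_open[where S="{0<..<R0}"])
         (use r 1 in \<open>auto simp: qf_def\<close>)
    then show ?thesis using 1 by (simp add: qdf_def)
  next
    case 2
    have "(qout has_real_derivative qd_of uout duout dduout r) (at r)"
      unfolding qout_def[abs_def] using r 2 R0 by (intro q_deriv uout_deriv duout_deriv uout_ne) auto
    then have "(qf has_real_derivative qd_of uout duout dduout r) (at r)"
      by (rule has_field_derivative_transform_within_open[where S="{R0<..<R1}"])
         (use r 2 in \<open>auto simp: qf_def\<close>)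
    then show ?thesis using 2 by (simp add: qdf_def)
  next
    case 3
    have "((\<lambda>_. 0) has_real_derivative 0) (at r)" by simp
    then have "(qf has_real_derivative 0) (at r)"
      by (rule has_field_derivative_transform_within_open[where S="{R1<..}"])
         (use r 3 R01 in \<open>auto simp: qf_def\<close>)
    then show ?thesis using 3 R01 by (simp add: qdf_def)
  qed
qed

lemma ric_in: assumes "0 < r" "r < R0"
  shows "3 * qf r + qdf r * r - (qf r)^2 * r^2 = kk^2"
proof -
  have "3 * qf r + qdf r * r - (qf r)^2 * r^2 = - (dduin r + 2 * duin r / r) / uin r"
    using assms uin_ne[of r] q_riccati[of uin r duin dduin] by (simp add: qf_def qdf_def qin_def)
  also have "\<dots> = kk^2" using assms uin_ne[of r] lapl_in[of r] by simp
  finally show ?thesis .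
qed

lemma ric_out: assumes "R0 \<le> r" "r < R1"
  shows "3 * qf r + qdf r * r - (qf r)^2 * r^2 = - 6 * Cc / uout r"
proof -
  have r: "0 < r" using assms R0 by simp
  have qf: "qf r = qout r" using assms match_q by (auto simp: qf_def)
  have "3 * qf r + qdf r * r - (qf r)^2 * r^2 = - (dduout r + 2 * duout r / r) / uout r"
    using assms r uout_ne[of r] q_riccati[of uout r duout dduout] by (simp add: qf qdf_def qout_def)
  also have "\<dots> = - 6 * Cc / uout r" using r lapl_out[of r] by simp
  finally show ?thesis .
qed

lemma qf_zero: "R1 < r \<Longrightarrow> qf r = 0" "R1 < r \<Longrightarrow> qdf r = 0"
  using R01 by (auto simp: qf_def qdf_def)

lemma qin_cont: "continuous_on {0<..R0} qin"
proof -
  have "continuous_on {0<..R0} (\<lambda>r. - duin r / (r * uin r))"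
    unfolding duin_def uin_def
    by (intro continuous_intros) (use uin_ne in \<open>auto simp: uin_def\<close>)
  then show ?thesis by (simp add: qin_def[abs_def])
qed

lemma qout_cont: "continuous_on {R0..R1} qout"
proof -
  have "continuous_on {R0..R1} (\<lambda>r. - duout r / (r * uout r))"
    unfolding duout_def uout_def
    by (intro continuous_intros) (use uout_ne R0 in \<open>auto simp: uout_def\<close>)
  then show ?thesis by (simp add: qout_def[abs_def])
qed

lemma qf_cont: "continuous_on {0<..} qf"
proof -
  have e: "qf = (\<lambda>r. if id r \<le> R0 then qin r else (if id r \<le> R1 then qout r else 0))"
    by (auto simp: qf_def[abs_def])
  show ?thesis unfolding e
  proof (rule continuous_on_cases_le)
    show "continuous_on {x \<in> {0<..}. id x \<le> R0} qin"
      using qin_cont by (rule continuous_on_subset) auto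
    show "continuous_on {x \<in> {0<..}. R0 \<le> id x} (\<lambda>r. if id r \<le> R1 then qout r else 0)"
    proof (rule continuous_on_cases_le)
      show "continuous_on {x \<in> {x \<in> {0<..}. R0 \<le> id x}. id x \<le> R1} qout"
        using qout_cont by (rule continuous_on_subset) auto
    qed (use qout_R1 in \<open>auto intro: continuous_intros\<close>)
  qed (use match_q R01 in \<open>auto intro: continuous_intros\<close>)
qed

lemma qin_bound: assumes "0 < r" "r \<le> R0" shows "0 \<le> qin r" "qin r \<le> kk^2 / (3 * cos lam)"
proof -
  define x where "x = kk * r"
  have kk: "kk > 0" using lam0 R0 by (simp add: kk_def)
  have x0: "0 < x" using assms kk by (simp add: x_def)
  have "lam * r \<le> lam * R0" using assms lam0 by (simp add: mult_left_mono)
  then have xl: "x \<le> lam" using assms R0 by (simp add: x_def kk_def field_simps)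
  have "sin x \<noteq> 0" using uin_pos[OF assms] by (auto simp: uin_def x_def)
  then have qe: "qin r = (sin x - x * cos x) / (r^2 * sin x)"
    using assms by (simp add: qin_def duin_def uin_def x_def field_simps power2_eq_square)
  have n0: "0 \<le> sin x - x * cos x" using x0 xl lam1 by (intro sin_minus_xcos_nonneg) auto
  have n1: "sin x - x * cos x \<le> x^3 / 3" using x0 by (intro sin_minus_xcos_le) auto
  have cl: "cos lam \<le> cos x" using x0 xl lam1 by (subst cos_mono_le_eq) auto
  have sx: "x * cos lam \<le> sin x" using n0 cl x0 by (smt (verit) mult_left_mono)
  have sx0: "0 < x * cos lam" using x0 cos_pos by simp
  show "0 \<le> qin r" using qe n0 sx sx0 by simp
  have "qin r \<le> (x^3 / 3) / (r^2 * (x * cos lam))"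
    unfolding qe using n0 n1 sx sx0 assms x0 by (intro frac_le) auto
  also have "\<dots> = kk^2 / (3 * cos lam)" using x0 assms cos_pos by (simp add: x_def field_simps power2_eq_square power3_eq_cube)
  finally show "qin r \<le> kk^2 / (3 * cos lam)" .
qed

definition "Mout = (Bc / R0^2 + 2 * Cc * R1) / (R0 * uout R1)"

lemma qout_bound: assumes "R0 \<le> r" "r \<le> R1" shows "\<bar>qout r\<bar> \<le> Mout"
proof -
  have r: "0 < r" using assms R0 by simp
  have Bc: "Bc \<ge> 0" using Cc_pos R0 R01 by (simp add: Bc_def)
  have "Bc / r^2 \<ge> 0" "2 * Cc * r \<ge> 0" using Bc Cc_pos r by auto
  then have "\<bar>duout r\<bar> \<le> Bc / r^2 + 2 * Cc * r" by (simp add: duout_def abs_le_iff)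
  also have "\<dots> \<le> Bc / R0^2 + 2 * Cc * R1"
    using assms Bc Cc_pos R0 by (intro add_mono divide_left_mono mult_left_mono power_mono) auto
  finally have n: "\<bar>duout r\<bar> \<le> Bc / R0^2 + 2 * Cc * R1" .
  have d: "R0 * uout R1 \<le> r * uout r"
    using assms uout_mono[OF assms] uout_R1_pos R0 by (intro mult_mono) auto
  have "\<bar>qout r\<bar> = \<bar>duout r\<bar> / (r * uout r)" using r uout_pos[OF assms] by (simp add: qout_def abs_divide abs_mult)
  also have "\<dots> \<le> (Bc / R0^2 + 2 * Cc * R1) / (R0 * uout R1)"
    using n d uout_R1_pos R0 by (intro frac_le) auto
  finally show ?thesis by (simp add: Mout_def)
qed

lemma qf_bounds: "\<exists>M. \<forall>r>0. \<bar>qf r\<bar> \<le> M \<and> \<bar>qdf r * r\<bar> \<le> M"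
proof -
  define M1 where "M1 = kk^2 / (3 * cos lam)"
  define Q where "Q = max M1 Mout"
  have Q: "\<bar>qf r\<bar> \<le> Q" if "r > 0" for r
  proof -
    consider "r \<le> R0" | "R0 < r" "r \<le> R1" | "R1 < r" by linarith
    then show ?thesis
    proof cases
      case 1 then show ?thesis using qin_bound[of r] that by (auto simp: qf_def Q_def M1_def)
    next
      case 2 then show ?thesis using qout_bound[of r] by (auto simp: qf_def Q_def)
    next
      case 3
      have "0 \<le> M1" using cos_pos by (simp add: M1_def)
      then show ?thesis using qf_zero(1)[of r] 3 by (auto simp: Q_def)
    qed
  qed
  have Q0: "Q \<ge> 0" using Q[of 1] by simp
  define M where "M = max Q (kk^2 + 3 * Q + Q^2 * R1^2 + 6 * Cc / uout R1)"
  have "\<bar>qdf r * r\<bar> \<le> M" if r: "r > 0" for r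
  proof -
    have qq: "(qf r)^2 * r^2 \<le> Q^2 * R1^2" if "r \<le> R1"
    proof -
      have "\<bar>qf r * r\<bar> \<le> Q * R1" using Q[OF r] that r Q0 by (simp add: abs_mult mult_mono)
      then have "\<bar>qf r * r\<bar>^2 \<le> (Q * R1)^2" by (intro power_mono) auto
      then show ?thesis by (simp add: power_mult_distrib)
    qed
    have q2: "0 \<le> (qf r)^2 * r^2" by simp
    consider "r < R0" | "R0 \<le> r" "r < R1" | "R1 \<le> r" by linarith
    then show ?thesis
    proof cases
      case 1
      have "qdf r * r = kk^2 - 3 * qf r + (qf r)^2 * r^2" using ric_in[OF r 1] by simp
      then have "\<bar>qdf r * r\<bar> \<le> kk^2 + 3 * Q + Q^2 * R1^2"
      proof -
        have "0 \<le> kk^2" "0 \<le> Q^2 * R1^2" by simp_all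
        then show ?thesis unfolding abs_le_iff using \<open>qdf r * r = kk^2 - 3 * qf r + (qf r)^2 * r^2\<close> Q[OF r] qq 1 R01 q2
          by (simp only: abs_le_iff) linarith
      qed
      moreover have "6 * Cc / uout R1 \<ge> 0" using Cc_pos uout_R1_pos by simp
      ultimately show ?thesis by (simp add: M_def)
    next
      case 2
      have e1: "qdf r * r = - 6 * Cc / uout r - 3 * qf r + (qf r)^2 * r^2" using ric_out[OF 2] by simp
      have e2: "0 \<le> 6 * Cc / uout r" using Cc_pos uout_pos[of r] 2 by simp
      have e3: "6 * Cc / uout r \<le> 6 * Cc / uout R1"
        using Cc_pos uout_pos[of r] 2 uout_mono[of r] uout_R1_pos by (intro divide_left_mono) auto
      have "\<bar>qdf r * r\<bar> \<le> kk^2 + 3 * Q + Q^2 * R1^2 + 6 * Cc / uout R1"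
      proof -
        have "0 \<le> kk^2" "0 \<le> Q^2 * R1^2" by simp_all
        then show ?thesis using e1 e2 e3 Q[OF r] qq 2 q2 by (simp only: abs_le_iff) linarith
      qed
      then show ?thesis by (simp add: M_def)
    next
      case 3 then have "qdf r = 0" using R01 by (simp add: qdf_def)
      then show ?thesis using Q0 by (simp add: M_def)
    qed
  qed
  then show ?thesis using Q by (intro exI[of _ M]) (auto simp: M_def le_max_iff_disj)
qed
end

lemma norm_shift_sq:
  fixes w :: "real^3"
  shows "norm (w + s *\<^sub>R axis k 1) = sqrt ((norm w)^2 + 2 * s * w $ k + s^2)"
proof -
  have "(norm (w + s *\<^sub>R axis k 1))^2 = (norm w)^2 + 2 * s * w $ k + s^2"
    by (simp add: power2_norm_eq_inner inner_add_left inner_add_right inner_axis inner_commute algebra_simps)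
       (simp add: power2_eq_square)
  then show ?thesis by (metis norm_ge_zero real_sqrt_unique)
qed

lemma norm_shift_sq2:
  fixes w :: "real^3"
  shows "(norm (w + s *\<^sub>R axis k 1))^2 = (norm w)^2 + 2 * s * w $ k + s^2"
  by (simp add: power2_norm_eq_inner inner_add_left inner_add_right inner_axis inner_commute algebra_simps)
     (simp add: power2_eq_square)

lemma sum_sq_norm: "(\<Sum>k\<in>UNIV. (w $ k)^2) = (norm (w :: real^3))^2"
  by (simp add: norm_vec_def L2_set_def sum_nonneg)

context prof
begin

definition "Gf z = qf (norm z) *\<^sub>R z"
definition "dGk k z = qf (norm z) + qdf (norm z) * (z $ k)^2 / norm z"

lemma qf_R1: "R1 \<le> r \<Longrightarrow> qf r = 0"
  using qout_R1 R01 by (auto simp: qf_def)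

lemma qdf_R1: "R1 \<le> r \<Longrightarrow> qdf r = 0"
  using R01 by (auto simp: qdf_def)

lemma Gf_van: "R1 \<le> norm z \<Longrightarrow> Gf z = 0"
  by (simp add: Gf_def qf_R1)

lemma dGk_van: "R1 \<le> norm z \<Longrightarrow> dGk k z = 0"
  by (simp add: dGk_def qf_R1 qdf_R1)

lemma Gf_bounds: "\<exists>M. \<forall>z k. norm (Gf z) \<le> M \<and> \<bar>dGk k z\<bar> \<le> M"
proof -
  obtain M where M: "\<And>r. r > 0 \<Longrightarrow> \<bar>qf r\<bar> \<le> M \<and> \<bar>qdf r * r\<bar> \<le> M" using qf_bounds by blast
  have M0: "M \<ge> 0" using M[of 1] by (meson abs_ge_zero order_trans zero_less_one)
  have q0: "qf 0 = 0" using R0 by (simp add: qf_def qin_def)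
  have "norm (Gf z) \<le> M * R1 + 2 * M" for z
  proof (cases "norm z < R1")
    case True
    show ?thesis
    proof (cases "z = 0")
      case False
      then have "norm (Gf z) = \<bar>qf (norm z)\<bar> * norm z" by (simp add: Gf_def)
      also have "\<dots> \<le> M * R1" using M[of "norm z"] False True M0 by (intro mult_mono) auto
      finally show ?thesis using M0 by simp
    qed (use M0 R0 R01 in \<open>simp add: Gf_def\<close>)
  next
    case False
    have "M * R1 \<ge> 0" using M0 R0 R01 by simp
    then show ?thesis using M0 Gf_van[of z] False by simp
  qed
  moreover have "\<bar>dGk k z\<bar> \<le> M * R1 + 2 * M" for z k
  proof (cases "z = 0")
    case True then show ?thesis using q0 M0 R0 R01 by (simp add: dGk_def)
  next
    case False
    have zk: "(z $ k)^2 \<le> (norm z)^2" using component_le_norm_cart[of z k]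
      by (metis abs_ge_zero power_mono power2_abs)
    have "\<bar>qdf (norm z) * (z $ k)^2 / norm z\<bar> = \<bar>qdf (norm z) * norm z\<bar> * ((z $ k)^2 / (norm z)^2)"
      using False by (simp add: abs_mult field_simps power2_eq_square)
    also have "\<dots> \<le> M * 1"
      using M[of "norm z"] False zk M0 by (intro mult_mono) (auto simp: divide_le_eq_1)
    finally have a: "\<bar>qdf (norm z) * (z $ k)^2 / norm z\<bar> \<le> M" by simp
    have b: "\<bar>qf (norm z)\<bar> \<le> M" using M[of "norm z"] False by simp
    have "\<bar>dGk k z\<bar> \<le> M + M" unfolding dGk_def
      using abs_triangle_ineq[of "qf (norm z)" "qdf (norm z) * (z $ k)^2 / norm z"] a b by linarith
    moreover have "M * R1 \<ge> 0" using M0 R0 R01 by simp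
    ultimately show ?thesis by simp
  qed
  ultimately show ?thesis by blast
qed

lemma Gf_cont: "continuous_on UNIV (Gf :: real^3 \<Rightarrow> real^3)"
proof -
  obtain M where M: "\<And>r. r > 0 \<Longrightarrow> \<bar>qf r\<bar> \<le> M \<and> \<bar>qdf r * r\<bar> \<le> M" using qf_bounds by blast
  have M0: "M \<ge> 0" using M[of 1] by (meson abs_ge_zero order_trans zero_less_one)
  have "isCont Gf z" for z :: "real^3"
  proof (cases "z = 0")
    case True
    have h1: "\<forall>\<^sub>F x in at (0::real^3). norm (Gf x) \<le> M * norm x"
      using M M0 by (auto simp: Gf_def eventually_at intro!: exI[of _ 1] mult_right_mono)
    have h2: "((\<lambda>x. M * norm x) \<longlongrightarrow> 0) (at (0::real^3))"
      by (auto intro!: tendsto_eq_intros)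
    have "((Gf :: real^3 \<Rightarrow> real^3) \<longlongrightarrow> 0) (at 0)" using Lim_null_comparison[OF h1 h2] by simp
    moreover have "(Gf :: real^3 \<Rightarrow> real^3) 0 = 0" by (simp add: Gf_def)
    ultimately show ?thesis using True by (simp add: isCont_def)
  next
    case False
    have "isCont (\<lambda>z. qf (norm z)) z"
      using qf_cont False
      by (intro continuous_at_compose[unfolded o_def, of z norm qf] continuous_intros)
         (auto simp: continuous_on_eq_continuous_at)
    then show ?thesis unfolding Gf_def[abs_def] by (intro continuous_intros)
  qed
  then show ?thesis by (simp add: continuous_at_imp_continuous_on)
qed

lemma Gf_deriv:
  fixes w :: "real^3"
  assumes w: "norm w \<noteq> 0" "norm w \<noteq> R0" "norm w \<noteq> R1"
  shows "((\<lambda>s. Gf (w + s *\<^sub>R axis k 1) $ k) has_real_derivative dGk k w) (at 0)"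
proof -
  let ?p = "\<lambda>s. (norm w)^2 + 2 * s * w $ k + s^2"
  have e: "(\<lambda>s. Gf (w + s *\<^sub>R axis k 1) $ k) = (\<lambda>s. qf (sqrt (?p s)) * (w $ k + s))"
    unfolding Gf_def norm_shift_sq by (simp add: axis_def)
  have p0: "?p 0 > 0" using w by simp
  have sq: "sqrt (?p 0) = norm w" by simp
  have dp: "(?p has_real_derivative 2 * w $ k) (at 0)"
    by (auto intro!: derivative_eq_intros)
  have ds: "((\<lambda>s. sqrt (?p s)) has_real_derivative (inverse (sqrt (?p 0)) / 2 * (2 * w $ k))) (at 0)"
    by (rule DERIV_chain2[OF DERIV_real_sqrt dp]) (use p0 in simp)
  have dq: "(qf has_real_derivative qdf (norm w)) (at (sqrt (?p 0)))"
    unfolding sq using w by (intro qf_deriv) auto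
  have "((\<lambda>s. qf (sqrt (?p s))) has_real_derivative qdf (norm w) * (inverse (sqrt (?p 0)) / 2 * (2 * w $ k))) (at 0)"
    by (rule DERIV_chain2[OF dq ds])
  then have "((\<lambda>s. qf (sqrt (?p s)) * (w $ k + s)) has_real_derivative
      qdf (norm w) * (inverse (sqrt (?p 0)) / 2 * (2 * w $ k)) * (w $ k + 0) + qf (sqrt (?p 0)) * 1) (at 0)"
    by (auto intro!: derivative_eq_intros)
  moreover have "qdf (norm w) * (inverse (sqrt (?p 0)) / 2 * (2 * w $ k)) * (w $ k + 0) + qf (sqrt (?p 0)) * 1 = dGk k w"
    unfolding sq using w by (simp add: dGk_def field_simps power2_eq_square)
  ultimately show ?thesis unfolding e by simp
qed

lemma div_ineq:
  fixes w :: "real^3"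
  assumes w: "norm w \<noteq> 0" "norm w \<noteq> R0" "norm w \<noteq> R1"
  shows "(\<Sum>k\<in>UNIV. dGk k w) - (norm (Gf w))^2 \<ge> kk^2 * heaviside (R0 - norm w) - cc * heaviside (R1 - norm w)"
proof -
  let ?r = "norm w"
  have r0: "?r > 0" using w by simp
  have "(\<Sum>k\<in>UNIV. dGk k w) = 3 * qf ?r + qdf ?r * (\<Sum>k\<in>UNIV. (w $ k)^2) / ?r"
    by (simp add: dGk_def sum.distrib sum_divide_distrib[symmetric] sum_distrib_left[symmetric])
  also have "\<dots> = 3 * qf ?r + qdf ?r * ?r" using r0 sum_sq_norm[of w] by (simp add: power2_eq_square)
  finally have s: "(\<Sum>k\<in>UNIV. dGk k w) = 3 * qf ?r + qdf ?r * ?r" .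
  have n: "(norm (Gf w))^2 = (qf ?r)^2 * ?r^2" by (simp add: Gf_def power_mult_distrib)
  consider "?r < R0" | "R0 < ?r" "?r < R1" | "R1 < ?r" using w R01 by linarith
  then show ?thesis
  proof cases
    case 1
    then show ?thesis using ric_in[OF r0 1] s n cc_pos R01 by (simp add: heaviside_def)
  next
    case 2
    then show ?thesis using ric_out[of ?r] out_ineq[of ?r] s n by (simp add: heaviside_def)
  next
    case 3
    then show ?thesis using qf_zero[OF 3] s n R01 by (simp add: heaviside_def)
  qed
qed

end

lemma ibp_dct:
  fixes H Dk :: "real^3 \<Rightarrow> real" and N :: "(real^3) set"
  assumes L: "L > 0" and cont: "continuous_on UNIV H" and per: "\<And>x. H (x + L *\<^sub>R axis k 1) = H x"
    and negl: "negligible N"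
    and der: "\<And>x. x \<in> fund_cube L - N \<Longrightarrow> ((\<lambda>s. H (x + s *\<^sub>R axis k 1)) has_real_derivative Dk x) (at 0)"
    and d0: "\<delta> > 0"
    and lip: "\<And>x t. x \<in> fund_cube L \<Longrightarrow> 0 < t \<Longrightarrow> t < \<delta> \<Longrightarrow> \<bar>H (x + t *\<^sub>R axis k 1) - H x\<bar> \<le> C * t"
    and bnd: "\<And>x. x \<in> fund_cube L \<Longrightarrow> \<bar>Dk x\<bar> \<le> C"
  shows "Dk integrable_on fund_cube L" "integral (fund_cube L) Dk = 0"
proof -
  let ?e = "axis k 1 :: real^3"
  let ?S = "fund_cube L"
  define tn where "tn n = min \<delta> L / (real n + 2)" for n :: nat
  have tn_pos: "tn n > 0" for n using d0 L by (simp add: tn_def)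
  have tn_lt: "tn n < \<delta>" "tn n \<le> L" for n
  proof -
    have "min \<delta> L / (real n + 2) \<le> min \<delta> L / 1" using d0 L by (intro divide_left_mono) auto
    moreover have "min \<delta> L / (real n + 2) < min \<delta> L / 1" using d0 L by (intro divide_strict_left_mono) auto
    ultimately show "tn n < \<delta>" "tn n \<le> L" by (auto simp: tn_def)
  qed
  have tn_lim: "tn \<longlonglongrightarrow> 0"
  proof -
    have "filterlim (\<lambda>n::nat. 2 + real n) at_top sequentially"
      by (rule filterlim_tendsto_add_at_top[OF tendsto_const filterlim_real_sequentially])
    then have "filterlim (\<lambda>n::nat. real n + 2) at_top sequentially" by (simp add: add.commute)
    then have "filterlim (\<lambda>n::nat. real n + 2) at_infinity sequentially"
      by (rule filterlim_at_top_imp_at_infinity)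
    then show ?thesis unfolding tn_def by (rule tendsto_divide_0[OF tendsto_const])
  qed
  define Q where "Q n x = (if x \<in> N then Dk x else (H (x + tn n *\<^sub>R ?e) - H x) / tn n)" for n x
  have cq: "continuous_on UNIV (\<lambda>x. (H (x + tn n *\<^sub>R ?e) - H x) / tn n)" for n
    using tn_pos[of n] by (intro continuous_intros continuous_on_compose2[OF cont]) auto
  have iq: "(\<lambda>x. (H (x + tn n *\<^sub>R ?e) - H x) / tn n) integrable_on ?S" for n
    unfolding fund_cube_def by (rule integrable_continuous[OF continuous_on_subset[OF cq]]) auto
  have iQ: "Q n integrable_on ?S" for n
    by (rule integrable_spike[OF iq[of n] negl]) (use tn_pos[of n] in \<open>auto simp: Q_def\<close>)
  have intQ: "integral ?S (Q n) = 0" for n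
  proof -
    have "integral ?S (Q n) = integral ?S (\<lambda>x. (H (x + tn n *\<^sub>R ?e) - H x) / tn n)"
      by (rule integral_spike[OF negl, symmetric]) (use tn_pos[of n] in \<open>auto simp: Q_def\<close>)
    also have "\<dots> = integral ?S (\<lambda>x. (1 / tn n) * (H (x + tn n *\<^sub>R ?e) - H x))" by simp
    also have "\<dots> = (1 / tn n) * (integral ?S (\<lambda>x. H (x + tn n *\<^sub>R ?e)) - integral ?S H)"
    proof -
      have i1: "(\<lambda>x. H (x + tn n *\<^sub>R ?e)) integrable_on ?S" unfolding fund_cube_def
        by (intro integrable_continuous continuous_on_subset[OF continuous_on_compose2[OF cont]] continuous_intros) auto
      have i2: "H integrable_on ?S" unfolding fund_cube_def
        by (intro integrable_continuous continuous_on_subset[OF cont]) auto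
      show ?thesis using integral_diff[OF i1 i2] by simp
    qed
    also have "\<dots> = 0"
      using periodic_shift_integral[OF cont per, of "tn n"] tn_pos[of n] tn_lt(2)[of n] by simp
    finally show ?thesis .
  qed
  have bQ: "norm (Q n x) \<le> C" if "x \<in> ?S" for n x
  proof (cases "x \<in> N")
    case True then show ?thesis using bnd[OF that] by (simp add: Q_def)
  next
    case False
    have "\<bar>H (x + tn n *\<^sub>R ?e) - H x\<bar> \<le> C * tn n" using lip[OF that tn_pos tn_lt(1)] .
    then show ?thesis using False tn_pos[of n] by (simp add: Q_def abs_divide divide_le_eq)
  qed
  have cQ: "(\<lambda>n. Q n x) \<longlonglongrightarrow> Dk x" if "x \<in> ?S" for x
  proof (cases "x \<in> N")
    case True then show ?thesis by (simp add: Q_def)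
  next
    case False
    have "((\<lambda>h. (H (x + (0 + h) *\<^sub>R ?e) - H (x + 0 *\<^sub>R ?e)) / h) \<longlongrightarrow> Dk x) (at 0)"
      using der[of x] that False by (simp add: DERIV_def)
    then have lim: "((\<lambda>h. (H (x + h *\<^sub>R ?e) - H x) / h) \<longlongrightarrow> Dk x) (at 0)" by simp
    have fl: "filterlim tn (at 0) sequentially"
    proof -
      have "\<forall>\<^sub>F n in sequentially. tn n \<in> UNIV \<and> tn n \<noteq> 0"
        using tn_pos by (intro always_eventually) (metis UNIV_I less_irrefl)
      then show ?thesis using tn_lim by (simp add: filterlim_at)
    qed
    have "((\<lambda>n. (H (x + tn n *\<^sub>R ?e) - H x) / tn n) \<longlongrightarrow> Dk x) sequentially"
      using filterlim_compose[OF lim fl] by simp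
    then show ?thesis using False by (simp add: Q_def)
  qed
  have hC: "(\<lambda>x. C) integrable_on ?S" unfolding fund_cube_def by (rule integrable_const)
  note dc = dominated_convergence[where f=Q and h="\<lambda>x. C" and g=Dk and S="?S", OF iQ hC bQ cQ]
  show "Dk integrable_on ?S" by (rule dc(1))
  from dc(2) have "(\<lambda>n. 0) \<longlonglongrightarrow> integral ?S Dk" by (simp add: intQ)
  then show "integral ?S Dk = 0" by (simp add: LIMSEQ_const_iff)
qed

lemma finite_sphere_line:
  fixes v :: "real^3"
  shows "finite {s::real. norm (v + s *\<^sub>R axis k 1) = \<rho>}"
proof -
  define d where "d = \<rho>^2 - (norm v)^2 + (v $ k)^2"
  have "{s::real. norm (v + s *\<^sub>R axis k 1) = \<rho>} \<subseteq> {sqrt d - v $ k, - sqrt d - v $ k}"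
  proof
    fix s assume "s \<in> {s::real. norm (v + s *\<^sub>R axis k 1) = \<rho>}"
    then have e: "sqrt ((norm v)^2 + 2 * s * v $ k + s^2) = \<rho>" by (simp add: norm_shift_sq)
    then have "\<rho> \<ge> 0" by (metis real_sqrt_ge_zero zero_le_power2 add_nonneg_nonneg norm_shift_sq norm_ge_zero)
    have "(norm v)^2 + 2 * s * v $ k + s^2 = (norm (v + s *\<^sub>R axis k 1))^2" by (simp add: norm_shift_sq2)
    then have "(norm v)^2 + 2 * s * v $ k + s^2 \<ge> 0" by simp
    then have "(norm v)^2 + 2 * s * v $ k + s^2 = \<rho>^2" using e by (metis real_sqrt_pow2)
    then have "(s + v $ k)^2 = d" by (simp add: d_def power2_eq_square algebra_simps)
    then have "\<bar>s + v $ k\<bar> = sqrt d" by (metis real_sqrt_abs)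
    then show "s \<in> {sqrt d - v $ k, - sqrt d - v $ k}" by (auto simp: abs_if split: if_splits)
  qed
  then show ?thesis by (rule finite_subset) simp
qed

lemma bounded_on_cbox:
  fixes h :: "real^3 \<Rightarrow> real"
  assumes "continuous_on UNIV h"
  shows "\<exists>B. \<forall>x\<in>cbox a b. \<bar>h x\<bar> \<le> B"
proof -
  have "compact (h ` cbox a b)"
    by (intro compact_continuous_image continuous_on_subset[OF assms]) auto
  then have "bounded (h ` cbox a b)" by (rule compact_imp_bounded)
  then show ?thesis by (auto simp: bounded_iff)
qed

locale mainloc = prof R0 R1 lam for R0 R1 lam +
  fixes L :: real and n :: nat and y :: "nat \<Rightarrow> real^3" and f :: "real^3 \<Rightarrow> complex"
    and D :: "real^3 \<Rightarrow> real^3 \<Rightarrow> complex"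
  assumes L2: "R1 < L / 2"
    and sep: "\<And>i j. i < n \<Longrightarrow> j < n \<Longrightarrow> i \<noteq> j \<Longrightarrow> torus_dist L (y i) (y j) \<ge> 2 * R1"
    and perf: "periodic3 L f"
    and fD: "\<And>x. (f has_derivative D x) (at x)"
    and Dc: "\<And>k. continuous_on UNIV (\<lambda>x. D x (axis k 1))"
begin

lemma L_pos: "L > 0" using L2 R0 R01 by simp
lemma delta_pos: "L / 2 - R1 > 0" using L2 by simp

definition "gg x = (cmod (f x))^2"
definition "dg k x = 2 * (Re (f x) * Re (D x (axis k 1)) + Im (f x) * Im (D x (axis k 1)))"

lemma f_cont: "continuous_on UNIV f"
  using fD has_derivative_continuous by (blast intro: continuous_at_imp_continuous_on)

lemma gg_cont: "continuous_on UNIV gg"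
  unfolding gg_def[abs_def] by (intro continuous_intros f_cont)

lemma dg_cont: "continuous_on UNIV (dg k)"
  unfolding dg_def[abs_def] by (intro continuous_intros f_cont Dc)

lemma f_per: "f (x + L *\<^sub>R axis k 1) = f x"
  using perf by (simp add: periodic3_def)

lemma gg_per: "gg (x + L *\<^sub>R axis k 1) = gg x"
  by (simp add: gg_def f_per)

lemma gg_nonneg: "gg x \<ge> 0" by (simp add: gg_def)

lemma gg_deriv: "((\<lambda>s. gg (x + s *\<^sub>R axis k 1)) has_real_derivative dg k x) (at 0)"
proof -
  let ?e = "axis k 1 :: real^3"
  have d1: "((\<lambda>s. f (x + s *\<^sub>R ?e)) has_derivative (\<lambda>h. D x (h *\<^sub>R ?e))) (at 0)"
  proof -
    have "((\<lambda>s::real. x + s *\<^sub>R ?e) has_derivative (\<lambda>h. h *\<^sub>R ?e)) (at 0)"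
      by (auto intro!: derivative_eq_intros)
    moreover have "(f has_derivative D x) (at (x + 0 *\<^sub>R ?e))" using fD by simp
    ultimately show ?thesis using diff_chain_at[of "\<lambda>s::real. x + s *\<^sub>R ?e" "\<lambda>h. h *\<^sub>R ?e" 0 f "D x"]
      by (simp add: o_def)
  qed
  have lin: "D x (h *\<^sub>R ?e) = h *\<^sub>R D x ?e" for h
    using fD[of x] by (simp add: has_derivative_def linear_simps(5) bounded_linear.linear linear_cmul)
  have dre: "((\<lambda>s. Re (f (x + s *\<^sub>R ?e))) has_real_derivative Re (D x ?e)) (at 0)"
    unfolding has_field_derivative_def using has_derivative_Re[OF d1] lin
    by (simp add: mult.commute[of _ "Re (D x ?e)"])
  have dim: "((\<lambda>s. Im (f (x + s *\<^sub>R ?e))) has_real_derivative Im (D x ?e)) (at 0)"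
    unfolding has_field_derivative_def using has_derivative_Im[OF d1] lin
    by (simp add: mult.commute[of _ "Im (D x ?e)"])
  have "((\<lambda>s. Re (f (x + s *\<^sub>R ?e)) * Re (f (x + s *\<^sub>R ?e)) + Im (f (x + s *\<^sub>R ?e)) * Im (f (x + s *\<^sub>R ?e))) has_real_derivative
      (Re (D x ?e) * Re (f (x + 0 *\<^sub>R ?e)) + Re (D x ?e) * Re (f (x + 0 *\<^sub>R ?e)) +
       (Im (D x ?e) * Im (f (x + 0 *\<^sub>R ?e)) + Im (D x ?e) * Im (f (x + 0 *\<^sub>R ?e))))) (at 0)"
    by (intro DERIV_add DERIV_mult dre dim)
  moreover have "(\<lambda>s. gg (x + s *\<^sub>R ?e)) = (\<lambda>s. Re (f (x + s *\<^sub>R ?e)) * Re (f (x + s *\<^sub>R ?e)) + Im (f (x + s *\<^sub>R ?e)) * Im (f (x + s *\<^sub>R ?e)))"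
    unfolding gg_def cmod_power2 by (simp add: power2_eq_square)
  ultimately show ?thesis by (simp add: dg_def algebra_simps)
qed

lemma grad_sq_eq: "grad_sq f x = (\<Sum>k\<in>UNIV. (cmod (D x (axis k 1)))^2)"
  using frechet_derivative_at[OF fD[of x]] by (simp add: grad_sq_def)

lemma pointwise_sq:
  fixes a w :: complex and F :: real
  shows "(cmod a)^2 \<ge> - F * (2 * (Re w * Re a + Im w * Im a)) - F^2 * (cmod w)^2"
proof -
  have "0 \<le> (cmod (a + F *\<^sub>R w))^2" by simp
  also have "\<dots> = (cmod a)^2 + F * (2 * (Re w * Re a + Im w * Im a)) + F^2 * (cmod w)^2"
    unfolding cmod_power2 by (simp add: power2_eq_square algebra_simps)
  finally show ?thesis by simp
qed


definition "cen i x0 = y i + L *\<^sub>R rnd L (x0 - y i)"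
definition "FF x = (\<Sum>i<n. Gf (wrap L (x - y i)))"
definition "AA k x = (\<Sum>i<n. dGk k (wrap L (x - y i)))"
definition "HH k x = FF x $ k * gg x"
definition "DD k x = AA k x * gg x + FF x $ k * dg k x"
definition "Bad = {x. \<exists>i<n. torus_dist L x (y i) \<in> {0, R0, R1}}"

lemma wrap_cen: "wrap L (x0 - y i) = x0 - cen i x0"
  by (simp add: wrap_def cen_def algebra_simps)

lemma td_cen: "torus_dist L x0 (y i) = norm (x0 - cen i x0)"
  using torus_dist_wrap[OF L_pos] wrap_cen by simp

lemma loc_G: assumes "norm (x - x0) < L / 2 - R1" shows "Gf (wrap L (x - y i)) = Gf (x - cen i x0)"
proof -
  have "Gf (wrap L (x - y i)) = Gf ((x - y i) - L *\<^sub>R rnd L (x0 - y i))"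
    by (rule local_rep[OF L_pos L2]) (use Gf_van assms in auto)
  then show ?thesis by (simp add: cen_def algebra_simps)
qed

lemma loc_dG: assumes "norm (x - x0) < L / 2 - R1" shows "dGk k (wrap L (x - y i)) = dGk k (x - cen i x0)"
proof -
  have "dGk k (wrap L (x - y i)) = dGk k ((x - y i) - L *\<^sub>R rnd L (x0 - y i))"
    by (rule local_rep[OF L_pos L2]) (use dGk_van assms in auto)
  then show ?thesis by (simp add: cen_def algebra_simps)
qed

lemma loc_G_line: "\<bar>s\<bar> < L / 2 - R1 \<Longrightarrow> Gf (wrap L (x0 + s *\<^sub>R axis k 1 - y i)) = Gf (x0 + s *\<^sub>R axis k 1 - cen i x0)"
  by (rule loc_G) simp

lemma loc_dG_line: "\<bar>s\<bar> < L / 2 - R1 \<Longrightarrow> dGk k' (wrap L (x0 + s *\<^sub>R axis k 1 - y i)) = dGk k' (x0 + s *\<^sub>R axis k 1 - cen i x0)"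
  by (rule loc_dG) simp

lemma Gw_cont: "isCont (\<lambda>x. Gf (wrap L (x - y i))) x0"
proof -
  have "isCont Gf (x0 - cen i x0)" using Gf_cont by (simp add: continuous_on_eq_continuous_at)
  then have "isCont (\<lambda>x. Gf (x - cen i x0)) x0"
    using continuous_at_compose[of x0 "\<lambda>x. x - cen i x0" Gf] by (simp add: o_def)
  then show ?thesis
    by (rule continuous_transform_within[OF _ delta_pos]) (auto simp: dist_norm loc_G)
qed

lemma FF_cont: "continuous_on UNIV FF"
  unfolding FF_def[abs_def] by (intro continuous_at_imp_continuous_on ballI continuous_intros Gw_cont)

lemma FF_per: "FF (x + L *\<^sub>R axis k 1) = FF x"
proof -
  have "wrap L (x + L *\<^sub>R axis k 1 - y i) = wrap L (x - y i)" for i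
  proof -
    have "x + L *\<^sub>R axis k 1 - y i = (x - y i) + L *\<^sub>R axis k 1" by (simp add: algebra_simps)
    then show ?thesis by (simp only: wrap_periodic[OF L_pos])
  qed
  then show ?thesis by (simp add: FF_def)
qed

lemma HH_cont: "continuous_on UNIV (HH k)"
  unfolding HH_def[abs_def] by (intro continuous_intros FF_cont gg_cont)

lemma HH_per: "HH k (x + L *\<^sub>R axis k' 1) = HH k x"
  by (simp add: HH_def FF_per gg_per)

lemma loc_deriv:
  assumes s0: "\<bar>s0\<bar> < L / 2 - R1"
    and nb: "\<And>i. i < n \<Longrightarrow> norm (x0 + s0 *\<^sub>R axis k 1 - cen i x0) \<notin> {0, R0, R1}"
  shows "((\<lambda>s. HH k (x0 + s *\<^sub>R axis k 1)) has_real_derivative DD k (x0 + s0 *\<^sub>R axis k 1)) (at s0)"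
proof -
  let ?e = "axis k 1 :: real^3"
  have dG: "((\<lambda>s. Gf (x0 + s *\<^sub>R ?e - cen i x0) $ k) has_real_derivative dGk k (x0 + s0 *\<^sub>R ?e - cen i x0)) (at s0)"
    if i: "i < n" for i
  proof -
    let ?w = "x0 + s0 *\<^sub>R ?e - cen i x0"
    have "((\<lambda>s. Gf (?w + s *\<^sub>R ?e) $ k) has_real_derivative dGk k ?w) (at 0)"
      using nb[OF i] by (intro Gf_deriv) auto
    then have "((\<lambda>s. Gf (x0 + (s + s0) *\<^sub>R ?e - cen i x0) $ k) has_real_derivative dGk k ?w) (at 0)"
      by (simp add: algebra_simps scaleR_add_left)
    then show ?thesis using DERIV_shift[of "\<lambda>s. Gf (x0 + s *\<^sub>R ?e - cen i x0) $ k" "dGk k ?w" 0 s0] by simp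
  qed
  have dF: "((\<lambda>s. (\<Sum>i<n. Gf (x0 + s *\<^sub>R ?e - cen i x0)) $ k) has_real_derivative
      (\<Sum>i<n. dGk k (x0 + s0 *\<^sub>R ?e - cen i x0))) (at s0)"
    unfolding sum_component by (intro DERIV_sum dG) auto
  have dgg: "((\<lambda>s. gg (x0 + s *\<^sub>R ?e)) has_real_derivative dg k (x0 + s0 *\<^sub>R ?e)) (at s0)"
  proof -
    have "((\<lambda>s. gg ((x0 + s0 *\<^sub>R ?e) + s *\<^sub>R ?e)) has_real_derivative dg k (x0 + s0 *\<^sub>R ?e)) (at 0)"
      by (rule gg_deriv)
    then have "((\<lambda>s. gg (x0 + (s + s0) *\<^sub>R ?e)) has_real_derivative dg k (x0 + s0 *\<^sub>R ?e)) (at 0)"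
      by (simp add: algebra_simps scaleR_add_left)
    then show ?thesis using DERIV_shift[of "\<lambda>s. gg (x0 + s *\<^sub>R ?e)" _ 0 s0] by simp
  qed
  have prod: "((\<lambda>s. (\<Sum>i<n. Gf (x0 + s *\<^sub>R ?e - cen i x0)) $ k * gg (x0 + s *\<^sub>R ?e)) has_real_derivative
     (\<Sum>i<n. dGk k (x0 + s0 *\<^sub>R ?e - cen i x0)) * gg (x0 + s0 *\<^sub>R ?e) +
     dg k (x0 + s0 *\<^sub>R ?e) * (\<Sum>i<n. Gf (x0 + s0 *\<^sub>R ?e - cen i x0)) $ k) (at s0)"
    by (rule DERIV_mult[OF dF dgg])
  have near: "norm (x0 + s *\<^sub>R ?e - x0) < L / 2 - R1" if "s \<in> {-(L/2 - R1)<..<L/2 - R1}" for s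
    using that by auto
  have eqv: "DD k (x0 + s0 *\<^sub>R ?e) = (\<Sum>i<n. dGk k (x0 + s0 *\<^sub>R ?e - cen i x0)) * gg (x0 + s0 *\<^sub>R ?e) +
     dg k (x0 + s0 *\<^sub>R ?e) * (\<Sum>i<n. Gf (x0 + s0 *\<^sub>R ?e - cen i x0)) $ k"
    using s0 by (simp add: DD_def AA_def FF_def loc_G_line loc_dG_line mult.commute)
  show ?thesis unfolding eqv
    by (rule has_field_derivative_transform_within_open[OF prod, where S="{-(L/2 - R1)<..<L/2 - R1}"])
       (use s0 in \<open>auto simp: HH_def FF_def loc_G_line\<close>)
qed

lemma HH_deriv:
  assumes "x0 \<notin> Bad"
  shows "((\<lambda>s. HH k (x0 + s *\<^sub>R axis k 1)) has_real_derivative DD k x0) (at 0)"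
  using loc_deriv[of 0 x0 k] assms delta_pos by (auto simp: Bad_def td_cen)

definition "Zv = {m :: real^3. \<forall>j. m $ j \<in> \<int>}"

lemma countable_Zv: "countable Zv"
proof -
  have "Zv \<subseteq> range (\<lambda>g :: 3 \<Rightarrow> int. \<chi> j. of_int (g j))"
  proof
    fix m assume "m \<in> Zv"
    then have "\<forall>j. \<exists>z::int. m $ j = of_int z" by (auto simp: Zv_def elim!: Ints_cases)
    then obtain g where "\<forall>j. m $ j = of_int (g j)" by metis
    then have "m = (\<chi> j. of_int (g j))" by (auto simp: vec_eq_iff)
    then show "m \<in> range (\<lambda>g :: 3 \<Rightarrow> int. \<chi> j. of_int (g j))" by blast
  qed
  moreover have "countable (range (\<lambda>g :: 3 \<Rightarrow> int. \<chi> j. of_int (g j)) :: (real^3) set)" by simp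
  ultimately show ?thesis by (rule countable_subset)
qed

lemma negligible_Bad: "negligible Bad"
proof -
  define Fam where "Fam = (\<lambda>(i, \<rho>, m). sphere (y i + L *\<^sub>R m) \<rho>) ` ({..<n} \<times> {0, R0, R1} \<times> Zv)"
  have "countable Fam" unfolding Fam_def using countable_Zv by auto
  moreover have "negligible S" if "S \<in> Fam" for S using that by (auto simp: Fam_def negligible_sphere)
  ultimately have "negligible (\<Union>Fam)" by (rule negligible_countable_Union)
  moreover have "Bad \<subseteq> \<Union>Fam"
  proof
    fix x assume "x \<in> Bad"
    then obtain i \<rho> where i: "i < n" "\<rho> \<in> {0, R0, R1}" "torus_dist L x (y i) = \<rho>" by (auto simp: Bad_def)
    have "rnd L (x - y i) \<in> Zv" using rnd_int by (simp add: Zv_def)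
    moreover have "dist (y i + L *\<^sub>R rnd L (x - y i)) x = \<rho>"
      using i(3) torus_dist_wrap[OF L_pos] by (simp add: wrap_def dist_norm norm_minus_commute algebra_simps)
    moreover have "sphere (y i + L *\<^sub>R rnd L (x - y i)) \<rho> \<in> Fam"
      unfolding Fam_def using i calculation by (intro image_eqI[where x="(i, \<rho>, rnd L (x - y i))"]) auto
    ultimately show "x \<in> \<Union>Fam" by (intro UnionI[of "sphere (y i + L *\<^sub>R rnd L (x - y i)) \<rho>"]) auto
  qed
  ultimately show ?thesis by (rule negligible_subset)
qed

definition "del = min (L / 2 - R1) 1"
definition "Kbox = (cbox (\<chi> i. -1) (\<chi> i. L + 1) :: (real^3) set)"

lemma del_pos: "del > 0" using delta_pos by (simp add: del_def)

lemma DD_bound: "\<exists>C. \<forall>x\<in>Kbox. \<bar>DD k x\<bar> \<le> C"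
proof -
  obtain M where M: "\<And>z :: real^3. \<And>k. norm (Gf z) \<le> M \<and> \<bar>dGk k z\<bar> \<le> M" using Gf_bounds by blast
  have M0: "M \<ge> 0" using M[of 0] norm_ge_zero order_trans by blast
  have M1: "\<bar>dGk k z\<bar> \<le> M" for z :: "real^3" and k using M by blast
  have M2: "norm (Gf z) \<le> M" for z :: "real^3" using M by blast
  obtain Bg where Bg: "\<And>x. x \<in> Kbox \<Longrightarrow> \<bar>gg x\<bar> \<le> Bg" using bounded_on_cbox[OF gg_cont] unfolding Kbox_def by blast
  obtain Bd where Bd: "\<And>x. x \<in> Kbox \<Longrightarrow> \<bar>dg k x\<bar> \<le> Bd" using bounded_on_cbox[OF dg_cont] unfolding Kbox_def by blast
  have A: "\<bar>AA k x\<bar> \<le> real n * M" for x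
  proof -
    have "\<bar>AA k x\<bar> \<le> (\<Sum>i<n. \<bar>dGk k (wrap L (x - y i))\<bar>)" unfolding AA_def by (rule sum_abs)
    also have "\<dots> \<le> real (card {..<n}) * M" by (rule sum_bounded_above) (use M1 in auto)
    finally show ?thesis by simp
  qed
  have F: "\<bar>FF x $ k\<bar> \<le> real n * M" for x
  proof -
    have "\<bar>FF x $ k\<bar> \<le> norm (FF x)" by (rule component_le_norm_cart)
    also have "\<dots> \<le> (\<Sum>i<n. norm (Gf (wrap L (x - y i))))" unfolding FF_def by (rule norm_sum)
    also have "\<dots> \<le> real (card {..<n}) * M" by (rule sum_bounded_above) (use M2 in auto)
    finally show ?thesis by simp
  qed
  have "\<bar>DD k x\<bar> \<le> real n * M * Bg + real n * M * Bd" if x: "x \<in> Kbox" for x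
  proof -
    have "\<bar>DD k x\<bar> \<le> \<bar>AA k x\<bar> * \<bar>gg x\<bar> + \<bar>FF x $ k\<bar> * \<bar>dg k x\<bar>"
      unfolding DD_def by (metis abs_mult abs_triangle_ineq)
    also have "\<dots> \<le> real n * M * Bg + real n * M * Bd"
      using A F Bg[OF x] Bd[OF x] M0 by (intro add_mono mult_mono) auto
    finally show ?thesis .
  qed
  then show ?thesis by blast
qed

lemma cube_Kbox: "x \<in> fund_cube L \<Longrightarrow> 0 \<le> s \<Longrightarrow> s \<le> 1 \<Longrightarrow> x + s *\<^sub>R axis k 1 \<in> Kbox"
  by (auto simp: fund_cube_def Kbox_def mem_box_cart axis_def) (smt (verit))+

lemma lip:
  assumes C: "\<forall>x\<in>Kbox. \<bar>DD k x\<bar> \<le> C"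
    and x: "x \<in> fund_cube L" and t: "0 < t" "t < del"
  shows "\<bar>HH k (x + t *\<^sub>R axis k 1) - HH k x\<bar> \<le> C * t"
proof -
  let ?e = "axis k 1 :: real^3"
  define E where "E = (\<Union>i\<in>{..<n}. \<Union>\<rho>\<in>{0, R0, R1}. {s. norm ((x - cen i x) + s *\<^sub>R ?e) = \<rho>})"
  have fE: "finite E" unfolding E_def by (intro finite_UN_I finite_sphere_line) auto
  have tl: "t < L / 2 - R1" using t by (simp add: del_def)
  have "((\<lambda>s. DD k (x + s *\<^sub>R ?e)) has_integral (HH k (x + t *\<^sub>R ?e) - HH k (x + 0 *\<^sub>R ?e))) {0..t}"
  proof (rule fundamental_theorem_of_calculus_interior_strong[OF fE])
    show "0 \<le> t" using t by simp
    fix s assume s: "s \<in> {0<..<t} - E"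
    have nb: "norm (x + s *\<^sub>R ?e - cen i x) \<notin> {0, R0, R1}" if "i < n" for i
    proof -
      have eq: "x + s *\<^sub>R ?e - cen i x = (x - cen i x) + s *\<^sub>R ?e" by (simp add: algebra_simps)
      have "norm ((x - cen i x) + s *\<^sub>R ?e) \<notin> {0, R0, R1}" using s that unfolding E_def by blast
      then show ?thesis unfolding eq .
    qed
    have "\<bar>s\<bar> < L / 2 - R1" using s tl by auto
    then show "((\<lambda>s. HH k (x + s *\<^sub>R ?e)) has_vector_derivative DD k (x + s *\<^sub>R ?e)) (at s)"
      using loc_deriv[of s x k] nb by (simp add: has_real_derivative_iff_has_vector_derivative)
  next
    show "continuous_on {0..t} (\<lambda>s. HH k (x + s *\<^sub>R ?e))"
      by (intro continuous_on_compose2[OF HH_cont] continuous_intros) auto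
  qed
  note ftc = this
  have bnd: "norm (DD k (x + s *\<^sub>R ?e)) \<le> C" if "s \<in> {0..t} - {}" for s
    using C cube_Kbox[OF x, of s k] that t by (auto simp: del_def)
  have C0: "0 \<le> C" using C cube_Kbox[OF x, of 0 k] by (metis abs_ge_zero add_0_right order_trans scale_zero_left zero_le_one order_refl)
  note hb = has_integral_bound_real[OF C0 finite.emptyI ftc bnd]
  then show ?thesis using t by simp
qed

lemma ibp_k: "DD k integrable_on fund_cube L" "integral (fund_cube L) (DD k) = 0"
proof -
  obtain C where C: "\<forall>x\<in>Kbox. \<bar>DD k x\<bar> \<le> C" using DD_bound by blast
  have bnd: "\<bar>DD k x\<bar> \<le> C" if "x \<in> fund_cube L" for x
    using C cube_Kbox[OF that, of 0 k] by simp
  have der: "((\<lambda>s. HH k (x + s *\<^sub>R axis k 1)) has_real_derivative DD k x) (at 0)"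
    if "x \<in> fund_cube L - Bad" for x using HH_deriv that by auto
  note r = ibp_dct[OF L_pos HH_cont HH_per negligible_Bad der del_pos lip[OF C] bnd]
  show "DD k integrable_on fund_cube L" "integral (fund_cube L) (DD k) = 0"
    using r by auto
qed

end

context mainloc
begin
lemma heav_int:
  "(\<lambda>x. heaviside (\<rho> - torus_dist L x (y i)) * gg x) integrable_on fund_cube L"
proof -
  let ?S = "fund_cube L"
  have Sl: "?S \<in> sets lebesgue" by (simp add: fund_cube_def)
  have td: "(\<lambda>x. torus_dist L x (y i)) \<in> borel_measurable (lebesgue_on ?S)"
    by (rule continuous_imp_measurable_on_sets_lebesgue[OF continuous_on_subset[OF continuous_torus_dist[OF L_pos] subset_UNIV] Sl])
  have e: "(\<lambda>x. heaviside (\<rho> - torus_dist L x (y i))) = (\<lambda>x. if torus_dist L x (y i) \<le> \<rho> then 1 else 0)"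
    by (auto simp: heaviside_def fun_eq_iff)
  have st: "{x \<in> space (lebesgue_on ?S). torus_dist L x (y i) \<le> \<rho>} \<in> sets (lebesgue_on ?S)"
    by (rule borel_measurable_le[OF td borel_measurable_const])
  have hm: "(\<lambda>x. heaviside (\<rho> - torus_dist L x (y i))) \<in> borel_measurable (lebesgue_on ?S)"
    unfolding e by (rule measurable_If[OF measurable_const measurable_const st]) auto
  have hb: "bounded ((\<lambda>x. heaviside (\<rho> - torus_dist L x (y i))) ` ?S)"
    by (rule boundedI[of _ 1]) (auto simp: heaviside_def)
  have ga: "gg absolutely_integrable_on ?S" unfolding fund_cube_def
    by (rule absolutely_integrable_continuous[OF continuous_on_subset[OF gg_cont]]) auto
  have "(\<lambda>x. heaviside (\<rho> - torus_dist L x (y i)) * gg x) absolutely_integrable_on ?S"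
    using absolutely_integrable_bounded_measurable_product[OF bilinear_times hm Sl hb ga] by simp
  then show ?thesis by (simp add: absolutely_integrable_on_def)
qed



lemma Th_int:
  "(\<lambda>x. (\<Sum>i<n. heaviside (\<rho> - torus_dist L x (y i))) * gg x) integrable_on fund_cube L"
proof -
  have "(\<lambda>x. \<Sum>i<n. heaviside (\<rho> - torus_dist L x (y i)) * gg x) integrable_on fund_cube L"
    by (rule integrable_sum) (simp_all add: heav_int)
  then show ?thesis by (simp add: sum_distrib_right)
qed

lemma gradsq_int: "grad_sq f integrable_on fund_cube L"
proof -
  have c: "continuous_on UNIV (\<lambda>x. \<Sum>k\<in>UNIV. (cmod (D x (axis k 1)))^2)"
    by (intro continuous_on_sum continuous_on_power continuous_on_norm Dc)
  have "(\<lambda>x. \<Sum>k\<in>UNIV. (cmod (D x (axis k 1)))^2) integrable_on fund_cube L"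
    unfolding fund_cube_def by (rule integrable_continuous[OF continuous_on_subset[OF c subset_UNIV]])
  then show ?thesis by (simp add: grad_sq_eq[abs_def])
qed


lemma td_sep:
  assumes i: "i < n" and j: "j < n" and ij: "i \<noteq> j" and ti: "torus_dist L x (y i) < R1"
  shows "torus_dist L x (y j) > R1"
proof -
  let ?ri = "rnd L (x - y i)" and ?rj = "rnd L (x - y j)"
  have int: "\<forall>m. (?ri - ?rj) $ m \<in> \<int>" using rnd_int[of L "x - y i"] rnd_int[of L "x - y j"] by auto
  have "torus_dist L (y j) (y i) \<le> norm (y j - y i - L *\<^sub>R (?ri - ?rj))" by (rule torus_dist_le[OF L_pos int])
  also have "y j - y i - L *\<^sub>R (?ri - ?rj) = wrap L (x - y i) - wrap L (x - y j)"
    by (simp add: wrap_def algebra_simps)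
  also have "norm (wrap L (x - y i) - wrap L (x - y j)) \<le> norm (wrap L (x - y i)) + norm (wrap L (x - y j))"
    by (rule norm_triangle_ineq4)
  also have "\<dots> = torus_dist L x (y i) + torus_dist L x (y j)" by (simp add: torus_dist_wrap[OF L_pos])
  finally have "torus_dist L (y j) (y i) \<le> torus_dist L x (y i) + torus_dist L x (y j)" .
  moreover have "2 * R1 \<le> torus_dist L (y j) (y i)" using sep[OF j i] ij by simp
  ultimately show ?thesis using ti by linarith
qed

lemma sum_single: "finite A \<Longrightarrow> a \<in> A \<Longrightarrow> (\<And>b. b \<in> A \<Longrightarrow> b \<noteq> a \<Longrightarrow> h b = 0) \<Longrightarrow> sum h A = h a"
  by (subst sum.remove[of A a]) (auto intro!: sum.neutral)

lemma div_pt: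
  assumes x: "x \<notin> Bad"
  shows "(\<Sum>k\<in>UNIV. AA k x) - (norm (FF x))^2 \<ge>
    kk^2 * (\<Sum>i<n. heaviside (R0 - torus_dist L x (y i))) - cc * (\<Sum>i<n. heaviside (R1 - torus_dist L x (y i)))"
proof (cases "\<exists>i0<n. torus_dist L x (y i0) < R1")
  case True
  then obtain i0 where i0: "i0 < n" "torus_dist L x (y i0) < R1" by blast
  let ?w = "wrap L (x - y i0)"
  have far: "torus_dist L x (y j) > R1" if "j < n" "j \<noteq> i0" for j
    using td_sep[OF i0(1) that(1) that(2)[symmetric] i0(2)] .
  have nw: "norm (wrap L (x - y j)) = torus_dist L x (y j)" for j by (simp add: torus_dist_wrap[OF L_pos])
  have vG: "Gf (wrap L (x - y j)) = 0" if "j < n" "j \<noteq> i0" for j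
    using far[OF that] nw[of j] Gf_van by (metis less_imp_le)
  have vD: "dGk k (wrap L (x - y j)) = 0" if "j < n" "j \<noteq> i0" for j k
    using far[OF that] nw[of j] dGk_van by (metis less_imp_le)
  have F: "FF x = Gf ?w" unfolding FF_def
    by (rule sum_single) (use i0 vG in auto)
  have A: "AA k x = dGk k ?w" for k unfolding AA_def
    by (rule sum_single) (use i0 vD in auto)
  have H0: "(\<Sum>i<n. heaviside (R0 - torus_dist L x (y i))) = heaviside (R0 - norm ?w)"
    by (subst sum_single[of _ i0]) (use i0 R01 in \<open>auto simp: heaviside_def nw dest: far\<close>)
  have H1: "(\<Sum>i<n. heaviside (R1 - torus_dist L x (y i))) = heaviside (R1 - norm ?w)"
    by (subst sum_single[of _ i0]) (use i0 R01 in \<open>auto simp: heaviside_def nw dest: far\<close>)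
  have "norm ?w \<noteq> 0" "norm ?w \<noteq> R0" "norm ?w \<noteq> R1" using x i0 nw[of i0] by (auto simp: Bad_def)
  from div_ineq[OF this] show ?thesis by (simp add: F A H0 H1)
next
  case False
  have far: "torus_dist L x (y j) > R1" if "j < n" for j
    using False that x by (force simp: Bad_def)
  have nw: "norm (wrap L (x - y j)) = torus_dist L x (y j)" for j by (simp add: torus_dist_wrap[OF L_pos])
  have vG: "Gf (wrap L (x - y j)) = 0" if "j < n" for j
    using far[OF that] nw[of j] Gf_van by (metis less_imp_le)
  have vD: "dGk k (wrap L (x - y j)) = 0" if "j < n" for j k
    using far[OF that] nw[of j] dGk_van by (metis less_imp_le)
  have F: "FF x = 0" unfolding FF_def using vG by (auto intro!: sum.neutral)
  have A: "AA k x = 0" for k unfolding AA_def using vD by (auto intro!: sum.neutral)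
  have H0: "(\<Sum>i<n. heaviside (R0 - torus_dist L x (y i))) = 0"
    using R01 by (auto intro!: sum.neutral simp: heaviside_def dest: far)
  have H1: "(\<Sum>i<n. heaviside (R1 - torus_dist L x (y i))) = 0"
    by (auto intro!: sum.neutral simp: heaviside_def dest: far)
  show ?thesis by (simp add: F A H0 H1)
qed

lemma pw:
  assumes x: "x \<notin> Bad"
  shows "grad_sq f x - kk^2 * (\<Sum>i<n. heaviside (R0 - torus_dist L x (y i))) * gg x \<ge>
     - (\<Sum>k\<in>UNIV. DD k x) - cc * (\<Sum>i<n. heaviside (R1 - torus_dist L x (y i))) * gg x"
proof -
  let ?T0 = "\<Sum>i<n. heaviside (R0 - torus_dist L x (y i))"
  let ?T1 = "\<Sum>i<n. heaviside (R1 - torus_dist L x (y i))"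
  have "grad_sq f x = (\<Sum>k\<in>UNIV. (cmod (D x (axis k 1)))^2)" by (rule grad_sq_eq)
  also have "\<dots> \<ge> (\<Sum>k\<in>UNIV. - (FF x $ k) * dg k x - (FF x $ k)^2 * gg x)"
    by (rule sum_mono) (use pointwise_sq in \<open>simp add: dg_def gg_def\<close>)
  finally have a: "grad_sq f x \<ge> - (\<Sum>k\<in>UNIV. FF x $ k * dg k x) - (\<Sum>k\<in>UNIV. (FF x $ k)^2) * gg x"
    by (simp add: sum_subtractf sum_negf sum_distrib_right)
  have nF: "(\<Sum>k\<in>UNIV. (FF x $ k)^2) = (norm (FF x))^2" by (rule sum_sq_norm)
  have b: "(\<Sum>k\<in>UNIV. DD k x) = (\<Sum>k\<in>UNIV. AA k x) * gg x + (\<Sum>k\<in>UNIV. FF x $ k * dg k x)"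
    by (simp add: DD_def sum.distrib sum_distrib_right)
  have c: "((\<Sum>k\<in>UNIV. AA k x) - (norm (FF x))^2) * gg x \<ge> (kk^2 * ?T0 - cc * ?T1) * gg x"
    by (rule mult_right_mono[OF div_pt[OF x] gg_nonneg])
  show ?thesis using a b c nF by (simp add: algebra_simps)
qed


lemma main_ineq:
  "integral (fund_cube L) (\<lambda>x. grad_sq f x
      - (lam\<^sup>2 / R0\<^sup>2) * (\<Sum>i<n. heaviside (R0 - torus_dist L x (y i))) * (cmod (f x))\<^sup>2)
   \<ge> - (3 * R0 / (R1 ^ 3 - R0 ^ 3)) * (tan lam / lam - 1)
      * integral (fund_cube L) (\<lambda>x. (\<Sum>i<n. heaviside (R1 - torus_dist L x (y i))) * (cmod (f x))\<^sup>2)"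
proof -
  let ?S = "fund_cube L"
  define T0 where "T0 x = (\<Sum>i<n. heaviside (R0 - torus_dist L x (y i)))" for x
  define T1 where "T1 x = (\<Sum>i<n. heaviside (R1 - torus_dist L x (y i)))" for x
  define l where "l x = grad_sq f x - kk^2 * (T0 x * gg x)" for x
  define r where "r x = - (\<Sum>k\<in>UNIV. DD k x) - cc * (T1 x * gg x)" for x
  have i0: "(\<lambda>x. T0 x * gg x) integrable_on ?S" unfolding T0_def by (rule Th_int)
  have i1: "(\<lambda>x. T1 x * gg x) integrable_on ?S" unfolding T1_def by (rule Th_int)
  have il: "l integrable_on ?S" unfolding l_def[abs_def]
    by (intro integrable_diff gradsq_int integrable_on_mult_right i0)
  have iD: "(\<lambda>x. \<Sum>k\<in>UNIV. DD k x) integrable_on ?S" by (intro integrable_sum ibp_k(1)) auto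
  have intD: "integral ?S (\<lambda>x. \<Sum>k\<in>UNIV. DD k x) = 0"
    by (subst integral_sum) (auto intro: ibp_k simp: ibp_k(2))
  have ir: "r integrable_on ?S" unfolding r_def[abs_def]
    by (intro integrable_diff integrable_neg iD integrable_on_mult_right i1)
  have intr: "integral ?S r = - cc * integral ?S (\<lambda>x. T1 x * gg x)"
  proof -
    have "integral ?S r = integral ?S (\<lambda>x. - (\<Sum>k\<in>UNIV. DD k x)) - integral ?S (\<lambda>x. cc * (T1 x * gg x))"
      unfolding r_def by (intro integral_diff integrable_neg iD integrable_on_mult_right i1)
    then show ?thesis using intD by simp
  qed
  define r' where "r' x = (if x \<in> Bad then l x else r x)" for x
  have ir': "r' integrable_on ?S"
    by (rule integrable_spike[OF ir negligible_Bad]) (auto simp: r'_def)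
  have intr': "integral ?S r' = integral ?S r"
    by (rule integral_spike[OF negligible_Bad]) (auto simp: r'_def)
  have "integral ?S r' \<le> integral ?S l"
  proof (rule integral_le[OF ir' il])
    fix x show "r' x \<le> l x"
      using pw[of x] by (auto simp: r'_def r_def l_def T0_def T1_def algebra_simps)
  qed
  then have main: "- cc * integral ?S (\<lambda>x. T1 x * gg x) \<le> integral ?S l" using intr intr' by simp
  have kk2: "lam\<^sup>2 / R0\<^sup>2 = kk^2" by (simp add: kk_def power_divide)
  have el: "(\<lambda>x. grad_sq f x - (lam\<^sup>2 / R0\<^sup>2) * (\<Sum>i<n. heaviside (R0 - torus_dist L x (y i))) * (cmod (f x))\<^sup>2) = l"
    by (auto simp: l_def T0_def gg_def kk2 fun_eq_iff algebra_simps)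
  have er: "(\<lambda>x. (\<Sum>i<n. heaviside (R1 - torus_dist L x (y i))) * (cmod (f x))\<^sup>2) = (\<lambda>x. T1 x * gg x)"
    by (auto simp: T1_def gg_def fun_eq_iff)
  have ecc: "cc = (3 * R0 / (R1 ^ 3 - R0 ^ 3)) * (tan lam / lam - 1)" by (simp add: cc_def Dd_def)
  show ?thesis unfolding el er using main ecc by simp
qed

end


theorem lemma3:
  fixes L R\<^sub>0 R lam :: real and n :: nat and y :: "nat \<Rightarrow> real^3"
    and f :: "real^3 \<Rightarrow> complex"
  assumes "R\<^sub>0 > 0" and "R > 0" and "R\<^sub>0 < R / 10" and "R / 10 < L / 2"
    and "\<And>i j. i < n \<Longrightarrow> j < n \<Longrightarrow> i \<noteq> j \<Longrightarrow> torus_dist L (y i) (y j) \<ge> R / 5"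
    and "0 \<le> lam" and "lam < pi / 2"
    and "periodic3 L f" and "C1_fun f"
  shows "integral (fund_cube L) (\<lambda>x. grad_sq f x
            - (lam\<^sup>2 / R\<^sub>0\<^sup>2) * (\<Sum>i<n. heaviside (R\<^sub>0 - torus_dist L x (y i))) * (cmod (f x))\<^sup>2)
         \<ge> - (3 * R\<^sub>0 / ((R / 10) ^ 3 - R\<^sub>0 ^ 3)) * tan_factor lam
            * integral (fund_cube L) (\<lambda>x. (\<Sum>i<n. heaviside (R / 10 - torus_dist L x (y i))) * (cmod (f x))\<^sup>2)"
proof -
  obtain D where fD: "\<And>x. (f has_derivative D x) (at x)"
    and Dc: "\<And>k. continuous_on UNIV (\<lambda>x. D x (axis k 1))"
    using assms(9) unfolding C1_fun_def by blast
  show ?thesis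
  proof (cases "lam = 0")
    case True
    have gs: "grad_sq f x = (\<Sum>k\<in>UNIV. (cmod (D x (axis k 1)))^2)" for x
      using frechet_derivative_at[OF fD[of x]] by (simp add: grad_sq_def)
    have c: "continuous_on UNIV (\<lambda>x. \<Sum>k\<in>UNIV. (cmod (D x (axis k 1)))^2)"
      by (intro continuous_on_sum continuous_on_power continuous_on_norm Dc)
    have "(\<lambda>x. \<Sum>k\<in>UNIV. (cmod (D x (axis k 1)))^2) integrable_on fund_cube L"
      unfolding fund_cube_def by (rule integrable_continuous[OF continuous_on_subset[OF c subset_UNIV]])
    then have "0 \<le> integral (fund_cube L) (\<lambda>x. \<Sum>k\<in>UNIV. (cmod (D x (axis k 1)))^2)"
      by (rule integral_nonneg) (simp add: sum_nonneg)
    then show ?thesis using True by (simp add: tan_factor_def gs)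
  next
    case False
    then have lam0: "lam > 0" using assms(6) by simp
    interpret mainloc R\<^sub>0 "R / 10" lam L n y f D
    proof (unfold_locales)
      show "0 < R\<^sub>0" "R\<^sub>0 < R / 10" "0 < lam" "lam < pi / 2" "R / 10 < L / 2"
        using assms lam0 by auto
      show "periodic3 L f" by (rule assms(8))
      show "(f has_derivative D x) (at x)" for x by (rule fD)
      show "continuous_on UNIV (\<lambda>x. D x (axis k 1))" for k by (rule Dc)
      show "2 * (R / 10) \<le> torus_dist L (y i) (y j)" if "i < n" "j < n" "i \<noteq> j" for i j
        using assms(5)[OF that] by simp
    qed
    show ?thesis using main_ineq False by (simp add: tan_factor_def)
  qed
qed

end
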